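(* Let $\alpha\in(0,0.3738)$ and let $c^{(\alpha)}_{i,k}$ be the L1-2 coefficients defined in the context. Then, for sufficiently small temporal stepsize $\tau$, $$c^{(\alpha)}_{k,k}>c^{(\alpha)}_{k-1,k}>\cdots>c^{(\alpha)}_{i,k}>c^{(\alpha)}_{i-1,k}>\cdots>c^{(\alpha)}_{1,k}>0\qquad\text{for all }k\ge 2 .$$
   Context: Let $\tilde a>0$, $T>\tilde a$, $N\in\mathbb{Z}^+$, $\tau=(T-\tilde a)/N$, $t_k=\tilde a+k\tau$ ($k=0,\dots,N$). Define $a^{(\alpha)}_{i,k}=\big(\log\frac{t_k}{t_{i-1}}\big)^{1-\alpha}-\big(\log\frac{t_k}{t_i}\big)^{1-\alpha}$ and, for $i\ge2$, $$b^{(\alpha)}_{i,k}=\frac{1}{\log\frac{t_i}{t_{i-2}}}\Big\{\log\tfrac{t_i}{t_{i-1}}\Big[\Big(\log\tfrac{t_k}{t_i}\Big)^{1-\alpha}+\Big(\log\tfrac{t_k}{t_{i-1}}\Big)^{1-\alpha}\Big]+\tfrac{2}{2-\alpha}\Big[\Big(\log\tfrac{t_k}{t_i}\Big)^{2-\alpha}-\Big(\log\tfrac{t_k}{t_{i-1}}\Big)^{2-\alpha}\Big]\Big\}.$$ The coefficients are: $c^{(\alpha)}_{1,1}=\frac{a^{(\alpha)}_{1,1}}{\Gamma(2-\alpha)\log\frac{t_1}{t_0}}$; for $k=2$: $c^{(\alpha)}_{1,2}=\frac{a^{(\alpha)}_{1,2}+b^{(\alpha)}_{2,2}}{\Gamma(2-\alpha)\log\frac{t_1}{t_0}}$,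 $c^{(\alpha)}_{2,2}=\frac{a^{(\alpha)}_{2,2}-b^{(\alpha)}_{2,2}}{\Gamma(2-\alpha)\log\frac{t_2}{t_1}}$; for $k\ge3$: $c^{(\alpha)}_{1,k}=\frac{a^{(\alpha)}_{1,k}+b^{(\alpha)}_{2,k}}{\Gamma(2-\alpha)\log\frac{t_1}{t_0}}$, $c^{(\alpha)}_{i,k}=\frac{a^{(\alpha)}_{i,k}-b^{(\alpha)}_{i,k}+b^{(\alpha)}_{i+1,k}}{\Gamma(2-\alpha)\log\frac{t_i}{t_{i-1}}}$ for $2\le i\le k-1$, and $c^{(\alpha)}_{k,k}=\frac{a^{(\alpha)}_{k,k}-b^{(\alpha)}_{k,k}}{\Gamma(2-\alpha)\log\frac{t_k}{t_{k-1}}}$. *)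

theory Defs
  imports "HOL-Analysis.Analysis"
begin

definition grid :: "real \<Rightarrow> real \<Rightarrow> nat \<Rightarrow> nat \<Rightarrow> real" where
  "grid a T N k = a + real k * ((T - a) / real N)"

definition acoef :: "real \<Rightarrow> (nat \<Rightarrow> real) \<Rightarrow> nat \<Rightarrow> nat \<Rightarrow> real" where
  "acoef \<alpha> t i k = (ln (t k / t (i - 1))) powr (1 - \<alpha>) - (ln (t k / t i)) powr (1 - \<alpha>)"

definition bcoef :: "real \<Rightarrow> (nat \<Rightarrow> real) \<Rightarrow> nat \<Rightarrow> nat \<Rightarrow> real" where
  "bcoef \<alpha> t i k = (1 / ln (t i / t (i - 2))) *
     (ln (t i / t (i - 1)) * ((ln (t k / t i)) powr (1 - \<alpha>) + (ln (t k / t (i - 1))) powr (1 - \<alpha>))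
      + (2 / (2 - \<alpha>)) * ((ln (t k / t i)) powr (2 - \<alpha>) - (ln (t k / t (i - 1))) powr (2 - \<alpha>)))"

definition ccoef :: "real \<Rightarrow> (nat \<Rightarrow> real) \<Rightarrow> nat \<Rightarrow> nat \<Rightarrow> real" where
  "ccoef \<alpha> t i k =
    (if k = 1 then acoef \<alpha> t 1 1
     else if i = 1 then acoef \<alpha> t 1 k + bcoef \<alpha> t 2 k
     else if i = k then acoef \<alpha> t k k - bcoef \<alpha> t k k
     else acoef \<alpha> t i k - bcoef \<alpha> t i k + bcoef \<alpha> t (i + 1) k)
    / (Gamma (2 - \<alpha>) * ln (t i / t (i - 1)))"

end

theory Submission
  imports Defs "HOL-Real_Asymp.Real_Asymp"
begin

definition av :: "real \<Rightarrow> (nat \<Rightarrow> real) \<Rightarrow> nat \<Rightarrow> real" where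
  "av \<alpha> v i = v (i - 1) powr (1 - \<alpha>) - v i powr (1 - \<alpha>)"

definition bv :: "real \<Rightarrow> (nat \<Rightarrow> real) \<Rightarrow> nat \<Rightarrow> real" where
  "bv \<alpha> v i = (1 / (v (i - 2) - v i)) *
     ((v (i - 1) - v i) * (v i powr (1 - \<alpha>) + v (i - 1) powr (1 - \<alpha>))
      + (2 / (2 - \<alpha>)) * (v i powr (2 - \<alpha>) - v (i - 1) powr (2 - \<alpha>)))"

definition cv :: "real \<Rightarrow> (nat \<Rightarrow> real) \<Rightarrow> nat \<Rightarrow> nat \<Rightarrow> real" where
  "cv \<alpha> v i k =
    (if k = 1 then av \<alpha> v 1
     else if i = 1 then av \<alpha> v 1 + bv \<alpha> v 2
     else if i = k then av \<alpha> v k - bv \<alpha> v k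
     else av \<alpha> v i - bv \<alpha> v i + bv \<alpha> v (i + 1))
    / (Gamma (2 - \<alpha>) * (v (i - 1) - v i))"

lemma ccoef_cv_gen:
  assumes L: "\<And>x y. ln (t x / t y) = v y - v x" and vk: "v k = 0"
  shows "ccoef \<alpha> t i k = cv \<alpha> v i k"
proof (cases "k = 1")
  case True
  with vk have "v 1 = 0" by simp
  then show ?thesis using True
    unfolding ccoef_def cv_def acoef_def bcoef_def av_def bv_def by (simp add: L)
next
  case False
  then show ?thesis
    unfolding ccoef_def cv_def acoef_def bcoef_def av_def bv_def by (simp add: L vk)
qed

lemma ccoef_cv:
  assumes pos: "\<And>j. t j > 0"
  shows "ccoef \<alpha> t i k = cv \<alpha> (\<lambda>j. ln (t k / t j)) i k"
proof (rule ccoef_cv_gen)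
  show "ln (t x / t y) = ln (t k / t y) - ln (t k / t x)" for x y
    using pos[of x] pos[of y] pos[of k] by (simp add: ln_div)
qed simp

lemma alg_b: "(c::real) \<noteq> 0 \<Longrightarrow> 1 / (c*A - c*B) * ((c*D - c*E) * (q*X + q*Y) + r * (c*q*Z - c*q*W))
   = q * (1 / (A - B) * ((D - E) * (X + Y) + r * (Z - W)))"
  by (cases "A = B") (simp_all add: field_simps)

lemma cv_scale:
  assumes c: "c > 0" and nn: "\<And>j. j \<le> k \<Longrightarrow> v j \<ge> 0" and i: "1 \<le> i" "i \<le> k"
  shows "cv \<alpha> (\<lambda>j. c * v j) i k = c powr (- \<alpha>) * cv \<alpha> v i k"
proof -
  have P1: "(c * v j) powr (1 - \<alpha>) = c powr (1 - \<alpha>) * v j powr (1 - \<alpha>)" if "j \<le> k" for j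
    using c nn[OF that] by (simp add: powr_mult)
  have cc: "c powr (2 - \<alpha>) = c * c powr (1 - \<alpha>)"
  proof -
    have "c powr (1 + (1 - \<alpha>)) = c powr 1 * c powr (1 - \<alpha>)" by (rule powr_add)
    then show ?thesis using c by simp
  qed
  have P2: "(c * v j) powr (2 - \<alpha>) = c * c powr (1 - \<alpha>) * v j powr (2 - \<alpha>)" if "j \<le> k" for j
    using c nn[OF that] cc by (simp add: powr_mult)
  have A: "av \<alpha> (\<lambda>j. c * v j) j = c powr (1 - \<alpha>) * av \<alpha> v j" if "j \<le> k" for j
    using that unfolding av_def by (simp add: P1 algebra_simps)
  have B: "bv \<alpha> (\<lambda>j. c * v j) j = c powr (1 - \<alpha>) * bv \<alpha> v j" if "j \<le> k" for j
  proof -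
    have j1: "j - 1 \<le> k" using that by simp
    show ?thesis unfolding bv_def
      apply (simp only: P1[OF that] P1[OF j1] P2[OF that] P2[OF j1])
      by (rule alg_b) (use c in simp)
  qed
  have cm: "c powr (1 - \<alpha>) = c * c powr (- \<alpha>)"
  proof -
    have "c powr (1 + (- \<alpha>)) = c powr 1 * c powr (- \<alpha>)" by (rule powr_add)
    then show ?thesis using c by simp
  qed
  have D: "(c * x - c * y) = c * (x - y)" for x y :: real by (simp add: algebra_simps)
  have E: "(c powr (1 - \<alpha>) * N) / (Gamma (2 - \<alpha>) * (c * d)) = c powr (- \<alpha>) * (N / (Gamma (2 - \<alpha>) * d))" for N d
    using c by (simp add: cm field_simps)
  define q where "q = c powr (1 - \<alpha>)"
  have N: "(if k = 1 then av \<alpha> (\<lambda>j. c * v j) 1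
     else if i = 1 then av \<alpha> (\<lambda>j. c * v j) 1 + bv \<alpha> (\<lambda>j. c * v j) 2
     else if i = k then av \<alpha> (\<lambda>j. c * v j) k - bv \<alpha> (\<lambda>j. c * v j) k
     else av \<alpha> (\<lambda>j. c * v j) i - bv \<alpha> (\<lambda>j. c * v j) i + bv \<alpha> (\<lambda>j. c * v j) (i + 1))
    = q * (if k = 1 then av \<alpha> v 1
     else if i = 1 then av \<alpha> v 1 + bv \<alpha> v 2
     else if i = k then av \<alpha> v k - bv \<alpha> v k
     else av \<alpha> v i - bv \<alpha> v i + bv \<alpha> v (i + 1))"
  proof (cases "k = 1")
    case True then show ?thesis using A[of 1] i by (simp add: q_def)
  next
    case k: False
    show ?thesis
    proof (cases "i = 1")
      case True then show ?thesis using A[of 1] B[of 2] i k by (simp add: q_def distrib_left)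
    next
      case i1: False
      show ?thesis
      proof (cases "i = k")
        case True then show ?thesis using A[of k] B[of k] i k i1 by (simp add: q_def right_diff_distrib)
      next
        case False then show ?thesis using A[of i] B[of i] B[of "i+1"] i k i1
          by (simp add: q_def right_diff_distrib distrib_left)
      qed
    qed
  qed
  show ?thesis
    unfolding cv_def N D E[folded q_def] ..
qed

lemma cv_cong:
  assumes "\<And>j. j \<le> k \<Longrightarrow> v j = w j" "1 \<le> i" "i \<le> k"
  shows "cv \<alpha> v i k = cv \<alpha> w i k"
  using assms unfolding cv_def av_def bv_def by auto

lemma cv_shift:
  assumes "d + 2 \<le> i" "i \<le> k"
  shows "cv \<alpha> v i k = cv \<alpha> (\<lambda>j. v (j + d)) (i - d) (k - d)"
proof -
  have e: "i - d - 1 + d = i - 1" "i - d - 2 + d = i - 2" "i - d + 1 + d = i + 1" "k - d + d = k" "i - d + d = i"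
     "k - d - 1 + d = k - 1" "k - d - 2 + d = k - 2" "i - d + 1 - 1 + d = i" "i - d + 1 - 2 + d = i - 1"
     "(1::nat) - 1 + d = d" "(1::nat) + d = Suc d" "(2::nat) + d = Suc (Suc d)" "(2::nat) - 1 + d = Suc d" "(2::nat) - 2 + d = d" "i + 1 - 2 = i - 1" "i + 1 - 1 = i"
    using assms by auto
  have n1: "(k - d = 1) = False" "(i - d = 1) = False" "(k = 1) = False" "(i = 1) = False"
    using assms by auto
  have eq: "(i - d = k - d) = (i = k)" using assms by auto
  show ?thesis unfolding cv_def av_def bv_def by (simp only: e n1 eq if_False)
qed

lemma tangent_ineq:
  fixes F F' F'' :: "real \<Rightarrow> real"
  assumes "x \<le> y"
    and d1: "\<And>s. s \<in> {x..y} \<Longrightarrow> (F has_real_derivative F' s) (at s)"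
    and d2: "\<And>s. s \<in> {x..y} \<Longrightarrow> (F' has_real_derivative F'' s) (at s)"
    and pos: "\<And>s. s \<in> {x..y} \<Longrightarrow> F'' s \<ge> 0"
  shows "F' x * (y - x) \<le> F y - F x" "F' y * (x - y) \<le> F x - F y"
  using f''_imp_f'[of "{x..y}" F F' F'' x y] f''_imp_f'[of "{x..y}" F F' F'' y x] assms by auto

lemma K1:
  fixes b x y :: real
  assumes b: "0 < b" "b < 1" and xy: "0 < x" "x < y"
  shows "y powr b - x powr b \<ge> (y - x) * (b * y powr (b - 1)) + (y - x)^2 * (b * (1 - b) * y powr (b - 2)) / 2"
proof -
  define gy where "gy = b * (1 - b) * y powr (b - 2)"
  have d1: "((\<lambda>s. - (s powr b) - gy * (s - y)^2 / 2) has_real_derivative (- (b * s powr (b - 1)) - gy * (s - y))) (at s)"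
    if "s \<in> {x..y}" for s
    using that xy by (auto intro!: derivative_eq_intros simp: power2_eq_square field_simps)
  have d2: "((\<lambda>s. - (b * s powr (b - 1)) - gy * (s - y)) has_real_derivative (b * (1 - b) * s powr (b - 2) - gy)) (at s)"
    if "s \<in> {x..y}" for s
    using that xy by (auto intro!: derivative_eq_intros simp: algebra_simps)
  have pos: "b * (1 - b) * s powr (b - 2) - gy \<ge> 0" if "s \<in> {x..y}" for s
  proof -
    have "y powr (b - 2) \<le> s powr (b - 2)" using that xy b by (intro powr_mono2') auto
    then show ?thesis unfolding gy_def using b by (simp add: mult_left_mono)
  qed
  have "(- (b * y powr (b - 1)) - gy * (y - y)) * (x - y) \<le> (- (x powr b) - gy * (x - y)^2 / 2) - (- (y powr b) - gy * (y - y)^2 / 2)"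
    using tangent_ineq(2)[of x y, OF _ d1 d2 pos] xy by simp
  then show ?thesis unfolding gy_def by (simp add: power2_commute algebra_simps)
qed

lemma K2:
  fixes b x y :: real
  assumes b: "0 < b" "b < 1" and xy: "0 < x" "x < y"
  shows "y powr b - x powr b \<le> (y - x) * (b * x powr (b - 1)) - (y - x)^2 * (b * (1 - b) * y powr (b - 2)) / 2"
proof -
  define gy where "gy = b * (1 - b) * y powr (b - 2)"
  have d1: "((\<lambda>s. - (s powr b) - gy * (s - x)^2 / 2) has_real_derivative (- (b * s powr (b - 1)) - gy * (s - x))) (at s)"
    if "s \<in> {x..y}" for s
    using that xy by (auto intro!: derivative_eq_intros simp: power2_eq_square field_simps)
  have d2: "((\<lambda>s. - (b * s powr (b - 1)) - gy * (s - x)) has_real_derivative (b * (1 - b) * s powr (b - 2) - gy)) (at s)"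
    if "s \<in> {x..y}" for s
    using that xy by (auto intro!: derivative_eq_intros simp: algebra_simps)
  have pos: "b * (1 - b) * s powr (b - 2) - gy \<ge> 0" if "s \<in> {x..y}" for s
  proof -
    have "y powr (b - 2) \<le> s powr (b - 2)" using that xy b by (intro powr_mono2') auto
    then show ?thesis unfolding gy_def using b by (simp add: mult_left_mono)
  qed
  have "(- (b * x powr (b - 1)) - gy * (x - x)) * (y - x) \<le> (- (y powr b) - gy * (y - x)^2 / 2) - (- (x powr b) - gy * (x - x)^2 / 2)"
    using tangent_ineq(1)[of x y, OF _ d1 d2 pos] xy by simp
  then show ?thesis unfolding gy_def by (simp add: algebra_simps)
qed

lemma K3:
  fixes b x y :: real
  assumes b: "0 < b" "b < 1" and xy: "0 < x" "x < y"
  defines "m \<equiv> 2 / (b + 1) * (y powr (b + 1) - x powr (b + 1)) - (y - x) * (x powr b + y powr b)"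
  shows "0 \<le> m" "m \<le> b * (1 - b) * x powr (b - 2) * (y - x)^3 / 6"
proof -
  define gx where "gx = b * (1 - b) * x powr (b - 2)"
  define qq where "qq = (\<lambda>s. 2 / (b + 1) * s powr (b + 1))"
  have dq: "(qq has_real_derivative D) (at s)" if "D = 2 * s powr b" "s > 0" for s D
  proof -
    have "(qq has_real_derivative 2 / (b + 1) * ((b + 1) * s powr (b + 1 - 1))) (at s)"
      unfolding qq_def by (intro DERIV_cmult has_real_derivative_powr that)
    then show ?thesis using that b by simp
  qed
  define F where "F = (\<lambda>K s. qq s - qq x - (s - x) * (x powr b + s powr b) - K * (s - x)^3)"
  define F' where "F' = (\<lambda>K s. s powr b - x powr b - (s - x) * (b * s powr (b - 1)) - 3 * K * (s - x)^2)"
  define F'' where "F'' = (\<lambda>K s. (s - x) * (b * (1 - b) * s powr (b - 2)) - 6 * K * (s - x))"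
  have pw: "s powr (b - 1) = s powr b / s" "s powr (b - 1 - 1) = s powr b / (s * s)"
     "s powr (b - 2) = s powr b / (s * s)" "s powr (b + 1 - 1) = s powr b" if "s > 0" for s
    using that by (simp_all add: powr_diff power2_eq_square)
  have d1: "(F K has_real_derivative F' K s) (at s)" if "s \<in> {x..y}" for s K
  proof -
    have s: "s > 0" using that xy by auto
    show ?thesis unfolding F_def F'_def
      using s b by (auto intro!: derivative_eq_intros dq simp: pw[OF s] power2_eq_square power3_eq_cube field_simps)
  qed
  have d2: "(F' K has_real_derivative F'' K s) (at s)" if "s \<in> {x..y}" for s K
  proof -
    have s: "s > 0" using that xy by auto
    show ?thesis unfolding F'_def F''_def
      using s b by (auto intro!: derivative_eq_intros simp: pw[OF s] power2_eq_square field_simps)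
  qed
  have d1m: "((\<lambda>s. - F K s) has_real_derivative - F' K s) (at s)" if "s \<in> {x..y}" for s K
    using d1[OF that] by (rule DERIV_minus)
  have d2m: "((\<lambda>s. - F' K s) has_real_derivative - F'' K s) (at s)" if "s \<in> {x..y}" for s K
    using d2[OF that] by (rule DERIV_minus)
  have pos0: "F'' 0 s \<ge> 0" if "s \<in> {x..y}" for s
    using that xy b unfolding F''_def by auto
  have "F' 0 x * (y - x) \<le> F 0 y - F 0 x"
    using tangent_ineq(1)[of x y, OF _ d1 d2 pos0] xy by simp
  then show "0 \<le> m" unfolding F_def F'_def m_def qq_def by (simp add: right_diff_distrib)
  have posK: "- F'' (gx / 6) s \<ge> 0" if "s \<in> {x..y}" for s
  proof -
    have "s powr (b - 2) \<le> x powr (b - 2)" using that xy b by (intro powr_mono2') auto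
    then have "b * (1 - b) * s powr (b - 2) \<le> gx" unfolding gx_def using b by (simp add: mult_left_mono)
    then have "(s - x) * (gx - b * (1 - b) * s powr (b - 2)) \<ge> 0" using that by (intro mult_nonneg_nonneg) auto
    moreover have "- F'' (gx / 6) s = (s - x) * (gx - b * (1 - b) * s powr (b - 2))"
      unfolding F''_def by (simp add: algebra_simps)
    ultimately show ?thesis by simp
  qed
  have "- F' (gx / 6) x * (y - x) \<le> - F (gx / 6) y - - F (gx / 6) x"
    using tangent_ineq(1)[of x y, OF _ d1m d2m posK] xy by simp
  then show "m \<le> b * (1 - b) * x powr (b - 2) * (y - x)^3 / 6" unfolding F_def F'_def m_def gx_def qq_def by (simp add: right_diff_distrib)
qed

lemma far_core:
  fixes a1 a0 mA mB mC h0 h1 h2 h3 gg0 gg1 gg2 G1 :: real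
  assumes h: "0 < h0" "0 < h1" "0 < h2" "0 < h3" "h0 \<le> h1" "h2 \<le> h3"
    and a1: "a1 \<ge> h1 * G1 + h1^2 * gg1 / 2" and a0: "a0 \<le> h2 * G1 - h2^2 * gg2 / 2"
    and m: "0 \<le> mB" "mA \<le> gg0 * h0^3 / 6" "mC \<le> gg1 * h2^3 / 6" "0 \<le> mA"
    and g: "gg0 < 6 * gg1" "gg1 \<le> 6 * gg2" "0 \<le> gg0" "0 \<le> gg1" "0 \<le> gg2"
  shows "(a0 + mC / (h2 + h3) - mB / (h1 + h2)) / h2 < (a1 + mB / (h1 + h2) - mA / (h0 + h1)) / h1"
proof -
  have s1: "h0^3 \<le> h1^2 * (h0 + h1) / 2"
  proof -
    have "h0^3 = h0 * h0 * h0" by (simp add: power3_eq_cube)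
    also have "\<dots> \<le> h0 * h1 * h1" using h by (intro mult_mono) auto
    also have "\<dots> \<le> h1^2 * (h0 + h1) / 2" using h by (simp add: power2_eq_square algebra_simps mult_right_mono)
    finally show ?thesis .
  qed
  have mA': "mA \<le> gg0 * h1^2 * (h0 + h1) / 12"
  proof -
    have "gg0 * h0^3 \<le> gg0 * (h1^2 * (h0 + h1) / 2)" using s1 g by (intro mult_left_mono) auto
    then show ?thesis using m by simp
  qed
  have t1: "mA / (h0 + h1) \<le> gg0 * h1^2 / 12"
    using mA' h by (simp add: divide_simps mult.commute mult.left_commute)
  have s2: "h2^3 \<le> h2^2 * (h2 + h3) / 2"
  proof -
    have "h2^3 = h2^2 * h2" by (simp add: power3_eq_cube power2_eq_square)
    also have "\<dots> \<le> h2^2 * ((h2 + h3) / 2)" using h by (intro mult_left_mono) auto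
    finally show ?thesis by simp
  qed
  have mC': "mC \<le> gg1 * h2^2 * (h2 + h3) / 12"
  proof -
    have "gg1 * h2^3 \<le> gg1 * (h2^2 * (h2 + h3) / 2)" using s2 g by (intro mult_left_mono) auto
    then show ?thesis using m by simp
  qed
  have t2: "mC / (h2 + h3) \<le> gg1 * h2^2 / 12"
    using mC' h by (simp add: divide_simps mult.commute mult.left_commute)
  have t3: "mB / (h1 + h2) \<ge> 0" using m h by simp
  have L: "(a1 + mB / (h1 + h2) - mA / (h0 + h1)) / h1 \<ge> (a1 - gg0 * h1^2 / 12) / h1"
  proof -
    have "a1 - gg0 * h1^2 / 12 \<le> a1 + mB / (h1 + h2) - mA / (h0 + h1)" using t1 t3 by linarith
    then show ?thesis using h by (intro divide_right_mono) auto
  qed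
  have L2: "(a1 - gg0 * h1^2 / 12) / h1 \<ge> G1 + h1 * gg1 / 2 - gg0 * h1 / 12"
  proof -
    have "a1 - gg0 * h1^2 / 12 \<ge> h1 * (G1 + h1 * gg1 / 2 - gg0 * h1 / 12)"
      using a1 by (simp add: power2_eq_square algebra_simps)
    then show ?thesis using h by (simp add: divide_simps mult.commute)
  qed
  have R: "(a0 + mC / (h2 + h3) - mB / (h1 + h2)) / h2 \<le> (a0 + gg1 * h2^2 / 12) / h2"
  proof -
    have "a0 + mC / (h2 + h3) - mB / (h1 + h2) \<le> a0 + gg1 * h2^2 / 12" using t2 t3 by linarith
    then show ?thesis using h by (intro divide_right_mono) auto
  qed
  have R2: "(a0 + gg1 * h2^2 / 12) / h2 \<le> G1 - h2 * gg2 / 2 + gg1 * h2 / 12"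
  proof -
    have "a0 + gg1 * h2^2 / 12 \<le> h2 * (G1 - h2 * gg2 / 2 + gg1 * h2 / 12)"
      using a0 by (simp add: power2_eq_square algebra_simps)
    then show ?thesis using h by (simp add: divide_simps mult.commute)
  qed
  have P1: "h1 * (gg1 / 2 - gg0 / 12) > 0" using h g by simp
  have P2: "h2 * (gg2 / 2 - gg1 / 12) \<ge> 0" using h g by simp
  have "G1 - h2 * gg2 / 2 + gg1 * h2 / 12 < G1 + h1 * gg1 / 2 - gg0 * h1 / 12"
    using P1 P2 by (simp add: algebra_simps)
  then show ?thesis using L L2 R R2 by linarith
qed

definition mm :: "real \<Rightarrow> real \<Rightarrow> real \<Rightarrow> real" where
  "mm \<alpha> x y = 2 / (2 - \<alpha>) * (y powr (2 - \<alpha>) - x powr (2 - \<alpha>)) - (y - x) * (x powr (1 - \<alpha>) + y powr (1 - \<alpha>))"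

lemma bv_mm: "bv \<alpha> v j = - mm \<alpha> (v j) (v (j - 1)) / (v (j - 2) - v j)"
proof -
  have "mm \<alpha> (v j) (v (j - 1)) = - ((v (j - 1) - v j) * (v j powr (1 - \<alpha>) + v (j - 1) powr (1 - \<alpha>))
      + (2 / (2 - \<alpha>)) * (v j powr (2 - \<alpha>) - v (j - 1) powr (2 - \<alpha>)))"
    unfolding mm_def by (simp add: algebra_simps)
  then show ?thesis unfolding bv_def by simp
qed

lemma K3a:
  assumes "0 < \<alpha>" "\<alpha> < 1" "0 < x" "x < y"
  shows "0 \<le> mm \<alpha> x y" "mm \<alpha> x y \<le> (1 - \<alpha>) * \<alpha> * x powr (- \<alpha> - 1) * (y - x)^3 / 6"
proof -
  have e: "1 - \<alpha> + 1 = 2 - \<alpha>" "1 - \<alpha> - 2 = - \<alpha> - 1" "1 - (1 - \<alpha>) = \<alpha>" by simp_all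
  note k = K3[of "1 - \<alpha>" x y, unfolded e]
  show "0 \<le> mm \<alpha> x y" using k(1) assms unfolding mm_def by simp
  show "mm \<alpha> x y \<le> (1 - \<alpha>) * \<alpha> * x powr (- \<alpha> - 1) * (y - x)^3 / 6" using k(2) assms unfolding mm_def by simp
qed

lemma K1a:
  fixes \<alpha> x y :: real
  assumes "0 < \<alpha>" "\<alpha> < 1" "0 < x" "x < y"
  shows "y powr (1 - \<alpha>) - x powr (1 - \<alpha>) \<ge> (y - x) * ((1 - \<alpha>) * y powr (- \<alpha>)) + (y - x)^2 * ((1 - \<alpha>) * \<alpha> * y powr (- \<alpha> - 1)) / 2"
proof -
  have e: "1 - \<alpha> - 1 = - \<alpha>" "1 - \<alpha> - 2 = - \<alpha> - 1" "1 - (1 - \<alpha>) = \<alpha>" by simp_all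
  show ?thesis using K1[of "1 - \<alpha>" x y, unfolded e] assms by simp
qed

lemma K2a:
  fixes \<alpha> x y :: real
  assumes "0 < \<alpha>" "\<alpha> < 1" "0 < x" "x < y"
  shows "y powr (1 - \<alpha>) - x powr (1 - \<alpha>) \<le> (y - x) * ((1 - \<alpha>) * x powr (- \<alpha>)) - (y - x)^2 * ((1 - \<alpha>) * \<alpha> * y powr (- \<alpha> - 1)) / 2"
proof -
  have e: "1 - \<alpha> - 1 = - \<alpha>" "1 - \<alpha> - 2 = - \<alpha> - 1" "1 - (1 - \<alpha>) = \<alpha>" by simp_all
  show ?thesis using K2[of "1 - \<alpha>" x y, unfolded e] assms by simp
qed

lemma far_cv:
  assumes al: "0 < \<alpha>" "\<alpha> < 1" and ik: "2 \<le> i" "i + 1 \<le> k"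
    and v: "0 < v (i+1)" "v (i+1) < v i" "v i < v (i-1)" "v (i-1) < v (i-2)"
    and v3: "i \<ge> 3 \<Longrightarrow> v (i-2) < v (i-3)"
    and hm: "v i - v (i+1) \<le> v (i-1) - v i" "i \<ge> 3 \<Longrightarrow> v (i-2) - v (i-1) \<le> v (i-3) - v (i-2)"
    and r: "v (i+1) powr (-\<alpha>-1) < 6 * v (i-1) powr (-\<alpha>-1)" "v (i-1) powr (-\<alpha>-1) \<le> 6 * v (i-2) powr (-\<alpha>-1)"
  shows "cv \<alpha> v (i-1) k < cv \<alpha> v i k"
proof -
  define c where "c = (1 - \<alpha>) * \<alpha>"
  have c: "c > 0" using al unfolding c_def by simp
  define h0 where "h0 = v i - v (i+1)"
  define h1 where "h1 = v (i-1) - v i"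
  define h2 where "h2 = v (i-2) - v (i-1)"
  define h3 where "h3 = (if i \<ge> 3 then v (i-3) - v (i-2) else h2)"
  define gg0 where "gg0 = c * v (i+1) powr (-\<alpha>-1)"
  define gg1 where "gg1 = c * v (i-1) powr (-\<alpha>-1)"
  define gg2 where "gg2 = c * v (i-2) powr (-\<alpha>-1)"
  define G1 where "G1 = (1 - \<alpha>) * v (i-1) powr (-\<alpha>)"
  define mA where "mA = mm \<alpha> (v (i+1)) (v i)"
  define mB where "mB = mm \<alpha> (v i) (v (i-1))"
  define mC where "mC = (if i \<ge> 3 then mm \<alpha> (v (i-1)) (v (i-2)) else 0)"
  define a1 where "a1 = av \<alpha> v i"
  define a0 where "a0 = av \<alpha> v (i-1)"
  have vpos: "0 < v i" "0 < v (i-1)" "0 < v (i-2)" using v by linarith+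
  have hpos: "0 < h0" "0 < h1" "0 < h2" "0 < h3" "h0 \<le> h1" "h2 \<le> h3"
    using v v3 hm unfolding h0_def h1_def h2_def h3_def by auto
  have A1: "a1 \<ge> h1 * G1 + h1^2 * gg1 / 2"
    using K1a[OF al vpos(1) v(3)] unfolding a1_def av_def h1_def G1_def gg1_def c_def
    by (simp add: algebra_simps)
  have i1: "i - 1 - 1 = i - 2" by simp
  have A0: "a0 \<le> h2 * G1 - h2^2 * gg2 / 2"
    using K2a[OF al vpos(2) v(4)] unfolding a0_def av_def h2_def G1_def gg2_def c_def i1
    by (simp add: algebra_simps)
  have MB: "0 \<le> mB" unfolding mB_def using K3a(1)[OF al vpos(1) v(3)] .
  have MA: "mA \<le> gg0 * h0^3 / 6" "0 \<le> mA" unfolding mA_def gg0_def c_def h0_def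
    using K3a[OF al v(1) v(2)] by (simp_all add: algebra_simps)
  have MC: "mC \<le> gg1 * h2^3 / 6"
  proof (cases "i \<ge> 3")
    case True then show ?thesis unfolding mC_def gg1_def c_def h2_def
      using K3a(2)[OF al vpos(2) v(4)] by (simp add: algebra_simps)
  next
    case False
    have "gg1 \<ge> 0" unfolding gg1_def using c by simp
    then show ?thesis using False hpos unfolding mC_def by simp
  qed
  have G: "gg0 < 6 * gg1" "gg1 \<le> 6 * gg2" "0 \<le> gg0" "0 \<le> gg1" "0 \<le> gg2"
    unfolding gg0_def gg1_def gg2_def using r c by simp_all
  have core: "(a0 + mC / (h2 + h3) - mB / (h1 + h2)) / h2 < (a1 + mB / (h1 + h2) - mA / (h0 + h1)) / h1"
    by (rule far_core[OF hpos A1 A0 MB MA(1) MC MA(2) G])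
  have Gam: "Gamma (2 - \<alpha>) > 0" using al by (intro Gamma_real_pos) simp
  have ci: "cv \<alpha> v i k = ((a1 + mB / (h1 + h2) - mA / (h0 + h1)) / h1) / Gamma (2 - \<alpha>)"
  proof -
    have "i \<noteq> k" "k \<noteq> 1" "i \<noteq> 1" using ik by auto
    moreover have "v (i - 2) - v i = h1 + h2" "v (i + 1 - 2) - v (i + 1) = h0 + h1" "i + 1 - 1 = i"
      unfolding h0_def h1_def h2_def using ik by (simp_all add: numeral_2_eq_2)
    ultimately show ?thesis unfolding cv_def a1_def mA_def mB_def bv_mm
      by (simp add: h1_def field_simps)
  qed
  have ci1: "cv \<alpha> v (i-1) k = ((a0 + mC / (h2 + h3) - mB / (h1 + h2)) / h2) / Gamma (2 - \<alpha>)"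
  proof (cases "i \<ge> 3")
    case True
    have "i - 1 \<noteq> k" "k \<noteq> 1" "i - 1 \<noteq> 1" using ik True by auto
    moreover have "v (i - 1 - 2) - v (i - 1) = h2 + h3" "v (i - 2) - v i = h1 + h2" "i - 1 + 1 = i" "i - 1 - 1 = i - 2"
      "i - 1 - 2 = i - 3"
      unfolding h3_def h1_def h2_def using ik True by (simp_all add: numeral_2_eq_2 numeral_3_eq_3)
    ultimately show ?thesis unfolding cv_def a0_def mC_def mB_def bv_mm using True
      by (simp add: h2_def field_simps)
  next
    case False
    then have i2: "i = 2" using ik by simp
    have "v 0 - v 2 = h1 + h2" unfolding h1_def h2_def i2 by simp
    then show ?thesis unfolding cv_def a0_def mC_def mB_def bv_mm using False ik i2
      by (simp add: h2_def field_simps)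
  qed
  show ?thesis unfolding ci ci1 by (rule divide_strict_right_mono[OF core Gam])
qed

lemma c1_cv:
  assumes al: "0 < \<alpha>" "\<alpha> < 1" and k: "3 \<le> k"
    and v: "0 < v 2" "v 2 < v 1" "v 1 < v 0" and hm: "v 1 - v 2 \<le> v 0 - v 1"
    and r1: "v 0 \<le> 31/10 * v 2" and r2: "v 1 - v 2 \<le> 21/20 * v 2"
  shows "cv \<alpha> v 1 k > 0"
proof -
  define h1 where "h1 = v 0 - v 1"
  define h2 where "h2 = v 1 - v 2"
  have hp: "0 < h1" "0 < h2" "h2 \<le> h1" using v hm unfolding h1_def h2_def by auto
  define m where "m = mm \<alpha> (v 2) (v 1)"
  define G0 where "G0 = (1 - \<alpha>) * v 0 powr (- \<alpha>)"
  define g2 where "g2 = (1 - \<alpha>) * \<alpha> * v 2 powr (- \<alpha> - 1)"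
  have v1p: "0 < v 1" using v by simp
  have A: "av \<alpha> v 1 \<ge> h1 * G0"
  proof -
    have "0 \<le> (v 0 - v 1)^2 * ((1 - \<alpha>) * \<alpha> * v 0 powr (- \<alpha> - 1)) / 2" using al by simp
    then show ?thesis using K1a[OF al v1p v(3)] unfolding av_def h1_def G0_def by simp
  qed
  have M: "m \<le> g2 * h2^3 / 6" unfolding m_def g2_def h2_def using K3a(2)[OF al v(1) v(2)] by simp
  have g2p: "g2 \<ge> 0" unfolding g2_def using al by simp
  have M2: "m / (h1 + h2) \<le> g2 * h2 * h1 / 12"
  proof -
    have "g2 * h2^3 / 6 \<le> g2 * h2 * h1 * (h1 + h2) / 12"
    proof -
      have "h2^3 \<le> h2 * h1 * (h1 + h2) / 2"
      proof -
        have "h2^3 = h2 * h2 * h2" by (simp add: power3_eq_cube)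
        also have "\<dots> \<le> h2 * h1 * h2" using hp by (intro mult_mono) auto
        also have "\<dots> \<le> h2 * h1 * (h1 + h2) / 2" using hp by (simp add: algebra_simps mult_left_mono)
        finally show ?thesis .
      qed
      then have X: "g2 * h2^3 \<le> g2 * (h2 * h1 * (h1 + h2) / 2)" by (rule mult_left_mono[OF _ g2p])
      then show ?thesis by (simp add: field_simps)
    qed
    then have "m \<le> g2 * h2 * h1 * (h1 + h2) / 12" using M by linarith
    then show ?thesis using hp by (simp add: divide_simps mult.commute mult.left_commute)
  qed
  have key: "g2 * h2 / 12 < G0"
  proof -
    have e1: "v 2 powr (- \<alpha> - 1) = v 2 powr (- \<alpha>) / v 2" using v by (simp add: powr_diff)
    have "g2 * h2 = (1 - \<alpha>) * \<alpha> * v 2 powr (- \<alpha>) * (h2 / v 2)" unfolding g2_def e1 by simp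
    also have "\<dots> \<le> (1 - \<alpha>) * \<alpha> * v 2 powr (- \<alpha>) * (21/20)"
      using r2 v al unfolding h2_def by (intro mult_left_mono) (auto simp: divide_simps)
    finally have L: "g2 * h2 / 12 \<le> (1 - \<alpha>) * v 2 powr (- \<alpha>) * (\<alpha> * 7 / 80)" by (simp add: ac_simps)
    have "v 0 powr (- \<alpha>) \<ge> (31/10 * v 2) powr (- \<alpha>)" using r1 v al by (intro powr_mono2') auto
    moreover have "(31/10 * v 2) powr (- \<alpha>) = (31/10) powr (- \<alpha>) * v 2 powr (- \<alpha>)" using v by (subst powr_mult) auto
    moreover have "(31/10::real) powr (- \<alpha>) \<ge> (31/10) powr (- 1)" using al by (intro powr_mono) auto
    moreover have "(31/10::real) powr (- 1) = 10/31" by (simp add: powr_minus_divide)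
    ultimately have "v 0 powr (- \<alpha>) \<ge> 10/31 * v 2 powr (- \<alpha>)"
      using mult_right_mono[of "10/31" "(31/10::real) powr (- \<alpha>)" "v 2 powr (- \<alpha>)"] by simp
    then have "G0 \<ge> (1 - \<alpha>) * v 2 powr (- \<alpha>) * (10/31)" unfolding G0_def using al by simp
    moreover have "(1 - \<alpha>) * v 2 powr (- \<alpha>) * (\<alpha> * 7 / 80) < (1 - \<alpha>) * v 2 powr (- \<alpha>) * (10/31)"
      using al v by (intro mult_strict_left_mono) auto
    ultimately show ?thesis using L by linarith
  qed
  have "h1 * (g2 * h2 / 12) < h1 * G0" using key hp by simp
  moreover have "g2 * h2 * h1 / 12 = h1 * (g2 * h2 / 12)" by (simp add: algebra_simps)
  ultimately have pos: "av \<alpha> v 1 - m / (h1 + h2) > 0" using A M2 by linarith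
  have Gam: "Gamma (2 - \<alpha>) > 0" using al by (intro Gamma_real_pos) simp
  have "cv \<alpha> v 1 k = (av \<alpha> v 1 - m / (h1 + h2)) / (Gamma (2 - \<alpha>) * h1)"
  proof -
    have "v 0 - v 2 = h1 + h2" unfolding h1_def h2_def by simp
    then show ?thesis using k unfolding cv_def bv_mm m_def h1_def by simp
  qed
  then show ?thesis using pos Gam hp by simp
qed

definition Y :: "real \<Rightarrow> nat \<Rightarrow> real" where
  "Y \<epsilon> n = (if n = 0 then 0 else if n = 1 then 1 else ln ((1 + \<epsilon>) / (1 - (real n - 1) * \<epsilon>)) / ln (1 + \<epsilon>))"

definition W :: "nat \<Rightarrow> real \<Rightarrow> nat \<Rightarrow> real" where
  "W K \<epsilon> = (\<lambda>j. Y \<epsilon> (K - j))"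

lemma Y_lim: "n \<le> 4 \<Longrightarrow> ((\<lambda>\<epsilon>. Y \<epsilon> n) \<longlongrightarrow> real n) (at_right 0)"
proof -
  assume "n \<le> 4"
  then have "n = 0 \<or> n = 1 \<or> n = 2 \<or> n = 3 \<or> n = 4" by auto
  moreover have "((\<lambda>\<epsilon>. Y \<epsilon> 2) \<longlongrightarrow> 2) (at_right 0)"
    unfolding Y_def by simp real_asymp
  moreover have "((\<lambda>\<epsilon>. Y \<epsilon> 3) \<longlongrightarrow> 3) (at_right 0)"
    unfolding Y_def by simp real_asymp
  moreover have "((\<lambda>\<epsilon>. Y \<epsilon> 4) \<longlongrightarrow> 4) (at_right 0)"
    unfolding Y_def by simp real_asymp
  ultimately show ?thesis by (auto simp: Y_def)
qed

lemma Y_nonneg: "n \<le> 4 \<Longrightarrow> eventually (\<lambda>\<epsilon>. Y \<epsilon> n \<ge> 0) (at_right 0)"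
proof -
  assume n: "n \<le> 4"
  show ?thesis
  proof (cases "n = 0")
    case True then show ?thesis by (simp add: Y_def)
  next
    case False
    then have "real n > 0" by simp
    from order_tendstoD(1)[OF Y_lim[OF n] this] show ?thesis
      by eventually_elim simp
  qed
qed

lemma av_tendsto:
  assumes lim: "\<And>j. j \<le> K \<Longrightarrow> ((\<lambda>\<epsilon>. w \<epsilon> j) \<longlongrightarrow> w0 j) F"
    and nn: "\<And>j. j \<le> K \<Longrightarrow> eventually (\<lambda>\<epsilon>. w \<epsilon> j \<ge> 0) F"
    and al: "0 < \<alpha>" "\<alpha> < 1" and j: "j \<le> K"
  shows "((\<lambda>\<epsilon>. av \<alpha> (w \<epsilon>) j) \<longlongrightarrow> av \<alpha> w0 j) F"
  unfolding av_def using j al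
  by (intro tendsto_intros lim nn disjI2 conjI) auto

lemma bv_tendsto:
  assumes lim: "\<And>j. j \<le> K \<Longrightarrow> ((\<lambda>\<epsilon>. w \<epsilon> j) \<longlongrightarrow> w0 j) F"
    and nn: "\<And>j. j \<le> K \<Longrightarrow> eventually (\<lambda>\<epsilon>. w \<epsilon> j \<ge> 0) F"
    and al: "0 < \<alpha>" "\<alpha> < 1" and j: "j \<le> K" and d: "w0 (j - 2) - w0 j \<noteq> 0"
  shows "((\<lambda>\<epsilon>. bv \<alpha> (w \<epsilon>) j) \<longlongrightarrow> bv \<alpha> w0 j) F"
  unfolding bv_def using j al d
  by (intro tendsto_intros lim nn disjI2 conjI) auto

lemma cv_tendsto_W:
  assumes K: "2 \<le> K" "K \<le> 4" and i: "1 \<le> i" "i \<le> K" and al: "0 < \<alpha>" "\<alpha> < 1"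
  shows "((\<lambda>\<epsilon>. cv \<alpha> (W K \<epsilon>) i K) \<longlongrightarrow> cv \<alpha> (\<lambda>j. real (K - j)) i K) (at_right 0)"
proof -
  define w0 where "w0 = (\<lambda>j. real (K - j))"
  have lim: "((\<lambda>\<epsilon>. W K \<epsilon> j) \<longlongrightarrow> w0 j) (at_right 0)" if "j \<le> K" for j
    unfolding W_def w0_def using that K by (intro Y_lim) auto
  have nn: "eventually (\<lambda>\<epsilon>. W K \<epsilon> j \<ge> 0) (at_right 0)" if "j \<le> K" for j
    unfolding W_def using that K by (intro Y_nonneg) auto
  have A: "((\<lambda>\<epsilon>. av \<alpha> (W K \<epsilon>) j) \<longlongrightarrow> av \<alpha> w0 j) (at_right 0)" if "j \<le> K" for j
    by (rule av_tendsto[OF lim nn al that])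
  have B: "((\<lambda>\<epsilon>. bv \<alpha> (W K \<epsilon>) j) \<longlongrightarrow> bv \<alpha> w0 j) (at_right 0)" if "2 \<le> j" "j \<le> K" for j
    by (rule bv_tendsto[OF lim nn al that(2)]) (use that in \<open>auto simp: w0_def\<close>)
  have G0: "Gamma (2 - \<alpha>) > 0" using al by (intro Gamma_real_pos) simp
  then have G: "Gamma (2 - \<alpha>) \<noteq> 0" by simp
  have D: "Gamma (2 - \<alpha>) * (w0 (i - 1) - w0 i) \<noteq> 0" using G i unfolding w0_def by auto
  have k1: "K \<noteq> 1" using K by simp
  have Dn: "((\<lambda>\<epsilon>. Gamma (2 - \<alpha>) * (W K \<epsilon> (i - 1) - W K \<epsilon> i)) \<longlongrightarrow> Gamma (2 - \<alpha>) * (w0 (i - 1) - w0 i)) (at_right 0)"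
    by (intro tendsto_mult tendsto_const tendsto_diff lim) (use i in auto)
  show ?thesis
  proof (cases "i = 1")
    case True
    have N: "((\<lambda>\<epsilon>. av \<alpha> (W K \<epsilon>) 1 + bv \<alpha> (W K \<epsilon>) 2) \<longlongrightarrow> av \<alpha> w0 1 + bv \<alpha> w0 2) (at_right 0)"
      by (intro tendsto_add A B) (use K in auto)
    show ?thesis unfolding cv_def w0_def[symmetric] using True k1 tendsto_divide[OF N Dn D]
      by (simp only: if_True if_False simp_thms)
  next
    case i1: False
    show ?thesis
    proof (cases "i = K")
      case True
      have N: "((\<lambda>\<epsilon>. av \<alpha> (W K \<epsilon>) K - bv \<alpha> (W K \<epsilon>) K) \<longlongrightarrow> av \<alpha> w0 K - bv \<alpha> w0 K) (at_right 0)"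
        by (intro tendsto_diff A B) (use K in auto)
      show ?thesis unfolding cv_def w0_def[symmetric] using True k1 i1 tendsto_divide[OF N Dn D]
        by (simp only: if_True if_False simp_thms)
    next
      case False
      have N: "((\<lambda>\<epsilon>. av \<alpha> (W K \<epsilon>) i - bv \<alpha> (W K \<epsilon>) i + bv \<alpha> (W K \<epsilon>) (i + 1)) \<longlongrightarrow> av \<alpha> w0 i - bv \<alpha> w0 i + bv \<alpha> w0 (i + 1)) (at_right 0)"
        by (intro tendsto_add tendsto_diff A B) (use K i i1 False in auto)
      show ?thesis unfolding cv_def w0_def[symmetric] using False k1 i1 tendsto_divide[OF N Dn D]
        by (simp only: if_True if_False simp_thms)
    qed
  qed
qed

lemma chainL: "(15434601/10000000::real)^107 \<le> 2^67"
proof -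
  define L where "L = (15434601/10000000::real)"
  have L0: "0 \<le> L" unfolding L_def by simp
  have s2: "L^2 \<le> (238226908029201/100000000000000::real)" unfolding L_def by (simp add: power2_eq_square)
  have s4: "L^4 \<le> (567520597091533918819/100000000000000000000::real)"
  proof -
    have "L^4 = (L^2)^2" by (simp flip: power_mult)
    also have "\<dots> \<le> (238226908029201/100000000000000::real)^2" using s2 L0 by (intro power_mono) auto
    also have "\<dots> \<le> (567520597091533918819/100000000000000000000::real)" by (simp add: power2_eq_square)
    finally show ?thesis .
  qed
  have s8: "L^8 \<le> (1610398140615655887581/50000000000000000000::real)"
  proof -
    have "L^8 = (L^4)^2" by (simp flip: power_mult)
    also have "\<dots> \<le> (567520597091533918819/100000000000000000000::real)^2" using s4 L0 by (intro power_mono) auto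
    also have "\<dots> \<le> (1610398140615655887581/50000000000000000000::real)" by (simp add: power2_eq_square)
    finally show ?thesis .
  qed
  have s16: "L^16 \<le> (103735286851934471714401/100000000000000000000::real)"
  proof -
    have "L^16 = (L^8)^2" by (simp flip: power_mult)
    also have "\<dots> \<le> (1610398140615655887581/50000000000000000000::real)^2" using s8 L0 by (intro power_mono) auto
    also have "\<dots> \<le> (103735286851934471714401/100000000000000000000::real)" by (simp add: power2_eq_square)
    finally show ?thesis .
  qed
  have s32: "L^32 \<le> (107610097382531288788969403/100000000000000000000::real)"
  proof -
    have "L^32 = (L^16)^2" by (simp flip: power_mult)
    also have "\<dots> \<le> (103735286851934471714401/100000000000000000000::real)^2" using s16 L0 by (intro power_mono) auto
    also have "\<dots> \<le> (107610097382531288788969403/100000000000000000000::real)" by (simp add: power2_eq_square)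
    finally show ?thesis .
  qed
  have s64: "L^64 \<le> (115799330586778673305622068762741/100000000000000000000::real)"
  proof -
    have "L^64 = (L^32)^2" by (simp flip: power_mult)
    also have "\<dots> \<le> (107610097382531288788969403/100000000000000000000::real)^2" using s32 L0 by (intro power_mono) auto
    also have "\<dots> \<le> (115799330586778673305622068762741/100000000000000000000::real)" by (simp add: power2_eq_square)
    finally show ?thesis .
  qed
  have e: "L^107 = L^64 * L^32 * L^8 * L^2 * L"
  proof -
    have "L^107 = L^(64+32+8+2+1)" by simp
    also have "\<dots> = L^64 * L^32 * L^8 * L^2 * L^1" by (simp only: power_add)
    finally show ?thesis by (simp only: power_one_right)
  qed
  have "L^64 * L^32 * L^8 * L^2 * L \<le> (115799330586778673305622068762741/100000000000000000000::real) * (107610097382531288788969403/100000000000000000000::real) * (1610398140615655887581/50000000000000000000::real) * (238226908029201/100000000000000::real) * L"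
    using s64 s32 s8 s2 L0 by (intro mult_mono) auto
  also have "\<dots> \<le> 2^67" unfolding L_def by simp
  finally have "L^107 \<le> 2^67" by (simp only: e)
  then show ?thesis by (simp only: L_def)
qed

lemma chainU: "3^67 \<le> (4973913/2500000::real)^107"
proof -
  define L where "L = (4973913/2500000::real)"
  have L0: "0 \<le> L" unfolding L_def by simp
  have s2: "(24739810531569/6250000000000::real) \<le> L^2" unfolding L_def by (simp add: power2_eq_square)
  have s4: "(391717264088276740061/25000000000000000000::real) \<le> L^4"
  proof -
    have "(391717264088276740061/25000000000000000000::real) \<le> (24739810531569/6250000000000::real)^2" by (simp add: power2_eq_square)
    also have "\<dots> \<le> (L^2)^2" using s2 by (intro power_mono) auto
    also have "\<dots> = L^4" by (simp flip: power_mult)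
    finally show ?thesis .
  qed
  have s8: "(24550786397568758750537/100000000000000000000::real) \<le> L^8"
  proof -
    have "(24550786397568758750537/100000000000000000000::real) \<le> (391717264088276740061/25000000000000000000::real)^2" by (simp add: power2_eq_square)
    also have "\<dots> \<le> (L^4)^2" using s4 by (intro power_mono) auto
    also have "\<dots> = L^8" by (simp flip: power_mult)
    finally show ?thesis .
  qed
  have s16: "(1506852781847617977002601/25000000000000000000::real) \<le> L^16"
  proof -
    have "(1506852781847617977002601/25000000000000000000::real) \<le> (24550786397568758750537/100000000000000000000::real)^2" by (simp add: power2_eq_square)
    also have "\<dots> \<le> (L^8)^2" using s8 by (intro power_mono) auto
    also have "\<dots> = L^16" by (simp flip: power_mult)
    finally show ?thesis .
  qed
  have s32: "(22706053061619049734623829571/6250000000000000000::real) \<le> L^32"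
  proof -
    have "(22706053061619049734623829571/6250000000000000000::real) \<le> (1506852781847617977002601/25000000000000000000::real)^2" by (simp add: power2_eq_square)
    also have "\<dots> \<le> (L^16)^2" using s16 by (intro power_mono) auto
    also have "\<dots> = L^32" by (simp flip: power_mult)
    finally show ?thesis .
  qed
  have s64: "(164980750603859143028773282816714101593/12500000000000000000::real) \<le> L^64"
  proof -
    have "(164980750603859143028773282816714101593/12500000000000000000::real) \<le> (22706053061619049734623829571/6250000000000000000::real)^2" by (simp add: power2_eq_square)
    also have "\<dots> \<le> (L^32)^2" using s32 by (intro power_mono) auto
    also have "\<dots> = L^64" by (simp flip: power_mult)
    finally show ?thesis .
  qed
  have e: "L^107 = L^64 * L^32 * L^8 * L^2 * L"
  proof -
    have "L^107 = L^(64+32+8+2+1)" by simp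
    also have "\<dots> = L^64 * L^32 * L^8 * L^2 * L^1" by (simp only: power_add)
    finally show ?thesis by (simp only: power_one_right)
  qed
  have "3^67 \<le> (164980750603859143028773282816714101593/12500000000000000000::real) * (22706053061619049734623829571/6250000000000000000::real) * (24550786397568758750537/100000000000000000000::real) * (24739810531569/6250000000000::real) * L" unfolding L_def by simp
  also have "\<dots> \<le> L^64 * L^32 * L^8 * L^2 * L"
    using s64 s32 s8 s2 L0 by (intro mult_mono) (auto simp del: zero_le_power)
  finally have "3^67 \<le> L^107" by (simp only: e)
  then show ?thesis by (simp only: L_def)
qed

lemma powr_frac: "0 < x \<Longrightarrow> x powr (real m / real n) = (x^m) powr (1 / real n)"
  by (simp add: powr_realpow[symmetric] powr_powr)

lemma powr_root_pow: "0 \<le> x \<Longrightarrow> 0 < n \<Longrightarrow> (x^n) powr (1 / real n) = (x::real)"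
proof (cases "x = 0")
  case False
  assume "0 \<le> x" "0 < n"
  then have "x > 0" using False by simp
  then show ?thesis using \<open>0 < n\<close> by (simp add: powr_realpow[symmetric] powr_powr)
qed simp

lemma X_lower: "(15434601/10000000::real) \<le> 2 powr (67/107)"
proof -
  have a: "(2::real) powr (67/107) = (2^67) powr (1/107)"
    using powr_frac[of 2 67 107] by (simp only: of_nat_numeral)
  have b: "(15434601/10000000::real) = ((15434601/10000000)^107) powr (1/107)"
    using powr_root_pow[of "15434601/10000000" 107] by (simp only: of_nat_numeral)
  have c: "((15434601/10000000::real)^107) powr (1/107) \<le> (2^67) powr (1/107)"
    by (rule powr_mono2[OF _ _ chainL]) simp_all
  show ?thesis using c unfolding a b[symmetric] .
qed

lemma Y_upper: "(3::real) powr (67/107) \<le> 4973913/2500000"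
proof -
  have a: "(3::real) powr (67/107) = (3^67) powr (1/107)"
    using powr_frac[of 3 67 107] by (simp only: of_nat_numeral)
  have b: "(4973913/2500000::real) = ((4973913/2500000)^107) powr (1/107)"
    using powr_root_pow[of "4973913/2500000" 107] by (simp only: of_nat_numeral)
  have c: "((3::real)^67) powr (1/107) \<le> ((4973913/2500000)^107) powr (1/107)"
    by (rule powr_mono2[OF _ _ chainU]) simp_all
  show ?thesis using c unfolding a b[symmetric] .
qed

lemma two_powr_le: assumes "0 \<le> b" "b \<le> 1" shows "(2::real) powr b \<le> 1 + b"
proof -
  have "exp ((1 - b) *\<^sub>R 0 + b *\<^sub>R ln 2) \<le> (1 - b) * exp 0 + b * exp (ln (2::real))"
    using assms by (intro convex_onD[OF exp_convex]) auto
  then show ?thesis by (simp add: powr_def)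
qed

lemma concave_pos:
  fixes f f' f'' :: "real \<Rightarrow> real"
  assumes p: "p < 1"
    and d1: "\<And>x. x \<in> {p..1} \<Longrightarrow> DERIV f x :> f' x"
    and d2: "\<And>x. x \<in> {p..1} \<Longrightarrow> DERIV f' x :> f'' x"
    and neg: "\<And>x. x \<in> {p..1} \<Longrightarrow> f'' x \<le> 0"
    and fp: "f p > 0" and f1: "f 1 = 0" and x: "p \<le> x" "x < 1"
  shows "f x > 0"
proof -
  have cc: "concave_on {p..1} f" by (rule f''_le0_imp_concave[OF convex_real_interval(5) d1 d2 neg])
  define t where "t = (x - p) / (1 - p)"
  have t: "0 \<le> t" "t < 1" using p x unfolding t_def by (auto simp: divide_simps)
  have tt: "t * (1 - p) = x - p" using p unfolding t_def by simp
  have "(1 - t) * p + t * 1 = p + t * (1 - p)" by (simp add: algebra_simps)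
  then have xe: "x = (1 - t) * p + t * 1" using tt by simp
  have "- f ((1 - t) *\<^sub>R p + t *\<^sub>R 1) \<le> (1 - t) * (- f p) + t * (- f 1)"
    using cc t p unfolding concave_on_def by (intro convex_onD) auto
  then have "f x \<ge> (1 - t) * f p" using f1 xe by simp
  moreover have "(1 - t) * f p > 0" using t fp by simp
  ultimately show ?thesis by linarith
qed

lemma ln_bounds: "2/3 \<le> ln (2::real)" "ln (2::real) \<le> 25/36" "79/50 * ln (2::real) \<le> ln 3"
proof -
  show "2/3 \<le> ln (2::real)" by (rule ln2_ge_two_thirds)
  show "ln (2::real) \<le> 25/36" by (rule ln2_le_25_over_36)
  have "ln ((2::real)^79) \<le> ln (3^50)" by (intro ln_le_cancel_iff[THEN iffD2]) simp_all
  moreover have "ln ((2::real)^79) = 79 * ln 2" using ln_realpow[of "2::real" 79] by simp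
  moreover have "ln ((3::real)^50) = 50 * ln 3" using ln_realpow[of "3::real" 50] by simp
  ultimately have "79 * ln (2::real) \<le> 50 * ln 3" by linarith
  then show "79/50 * ln (2::real) \<le> ln 3" by linarith
qed

lemma E3_ge:
  assumes "67/107 \<le> b"
  shows "exp (b * ln 3) \<ge> (1 + 67/107 * (29/50) * (2/3)) * exp (b * ln (2::real))"
proof -
  note l = ln_bounds
  have d: "b * (ln 3 - ln 2) \<ge> 67/107 * ((29/50) * (2/3))"
  proof -
    have "ln 3 - ln 2 \<ge> (29/50) * (2/3::real)" using l by linarith
    then show ?thesis using assms by (intro mult_mono) auto
  qed
  have "exp (b * ln 3) = exp (b * (ln 3 - ln 2)) * exp (b * ln 2)" by (simp add: exp_add[symmetric] algebra_simps)
  also have "\<dots> \<ge> (1 + b * (ln 3 - ln 2)) * exp (b * ln 2)"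
    by (intro mult_right_mono exp_ge_add_one_self) auto
  finally have "(1 + b * (ln 3 - ln 2)) * exp (b * ln 2) \<le> exp (b * ln 3)" .
  moreover have "(1 + 67/107 * (29/50) * (2/3)) * exp (b * ln (2::real)) \<le> (1 + b * (ln 3 - ln 2)) * exp (b * ln 2)"
    using d by (intro mult_right_mono) auto
  ultimately show ?thesis by linarith
qed

lemma V5:
  fixes b :: real assumes b: "67/107 \<le> b" "b < 1"
  shows "(3*b+15) * 2 powr b - (b+7) * 3 powr b - 3*b - 9 > 0"
proof -
  define l2 where "l2 = ln (2::real)"
  define l3 where "l3 = ln (3::real)"
  define f where "f = (\<lambda>b. (3*b+15) * exp (b * l2) - (b+7) * exp (b * l3) - 3*b - 9)"
  define f' where "f' = (\<lambda>b. 3 * exp (b * l2) + (3*b+15) * (l2 * exp (b * l2)) - exp (b * l3) - (b+7) * (l3 * exp (b * l3)) - 3)"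
  define f'' where "f'' = (\<lambda>b. (6 + (3*b+15) * l2) * (l2 * exp (b * l2)) - (2 + (b+7) * l3) * (l3 * exp (b * l3)))"
  have d1: "DERIV f x :> f' x" for x
    unfolding f_def f'_def by (auto intro!: derivative_eq_intros simp: algebra_simps)
  have d2: "DERIV f' x :> f'' x" for x
    unfolding f'_def f''_def by (auto intro!: derivative_eq_intros simp: algebra_simps)
  note l = ln_bounds[folded l2_def l3_def]
  have neg: "f'' x \<le> 0" if x: "x \<in> {67/107..1}" for x
  proof -
    have E: "exp (x * l3) \<ge> (1 + 67/107 * (29/50) * (2/3)) * exp (x * l2)"
      using E3_ge[of x] x unfolding l2_def l3_def by auto
    have A: "6 + (3*x+15) * l2 \<le> 37/2"
    proof -
      have "(3*x+15) * l2 \<le> 18 * (25/36)" using x l by (intro mult_mono) auto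
      then show ?thesis by simp
    qed
    have B: "2 + (x+7) * l3 \<ge> 2 + (67/107 + 7) * (79/50 * (2/3))"
    proof -
      have "(x+7) * l3 \<ge> (67/107 + 7) * (79/50 * (2/3))" using x l by (intro mult_mono) auto
      then show ?thesis by simp
    qed
    have l3p: "l3 \<ge> 79/50 * l2" using l by simp
    have e2: "exp (x * l2) > 0" by simp
    have "(2 + (x+7) * l3) * (l3 * exp (x * l3)) \<ge>
          (2 + (67/107 + 7) * (79/50 * (2/3))) * ((79/50 * l2) * ((1 + 67/107 * (29/50) * (2/3)) * exp (x * l2)))"
      using B l3p E l e2 by (intro mult_mono) auto
    moreover have "(6 + (3*x+15) * l2) * (l2 * exp (x * l2)) \<le> 37/2 * (l2 * exp (x * l2))"
      using A l e2 by (intro mult_right_mono) auto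
    moreover have "37/2 * (l2 * exp (x * l2)) \<le> (2 + (67/107 + 7) * (79/50 * (2/3))) * ((79/50 * l2) * ((1 + 67/107 * (29/50) * (2/3)) * exp (x * l2)))"
    proof -
      have "l2 * exp (x * l2) \<ge> 0" using l e2 by simp
      then have "37/2 * (l2 * exp (x * l2)) \<le> ((2 + (67/107 + 7) * (79/50 * (2/3))) * (79/50) * (1 + 67/107 * (29/50) * (2/3))) * (l2 * exp (x * l2))"
        by (intro mult_right_mono) auto
      then show ?thesis by (simp add: algebra_simps)
    qed
    ultimately show ?thesis unfolding f''_def by linarith
  qed
  have fp: "f (67/107) > 0"
  proof -
    have x: "exp (67/107 * l2) \<ge> 15434601/10000000" using X_lower unfolding l2_def by (simp add: powr_def)
    have y: "exp (67/107 * l3) \<le> 4973913/2500000" using Y_upper unfolding l3_def by (simp add: powr_def)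
    have "(3*(67/107)+15) * exp (67/107 * l2) \<ge> (3*(67/107)+15) * (15434601/10000000)" using x by (intro mult_left_mono) auto
    moreover have "(67/107+7) * exp (67/107 * l3) \<le> (67/107+7) * (4973913/2500000)" using y by (intro mult_left_mono) auto
    ultimately show ?thesis unfolding f_def by simp
  qed
  have f1: "f 1 = 0" unfolding f_def l2_def l3_def by simp
  have "f b > 0" by (rule concave_pos[of "67/107" f f' f'', OF _ d1 d2 neg fp f1 b]) auto
  then show ?thesis unfolding f_def l2_def l3_def by (simp add: powr_def)
qed


lemma V3:
  fixes b :: real assumes b: "67/107 \<le> b" "b < 1"
  shows "(2*b+10) * 2 powr b - (2*b+2) * 3 powr b - 3*b - 9 > 0"
proof -
  define l2 where "l2 = ln (2::real)"
  define l3 where "l3 = ln (3::real)"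
  define f where "f = (\<lambda>b. (2*b+10) * exp (b * l2) - (2*b+2) * exp (b * l3) - 3*b - 9)"
  define f' where "f' = (\<lambda>b. 2 * exp (b * l2) + (2*b+10) * (l2 * exp (b * l2)) - 2 * exp (b * l3) - (2*b+2) * (l3 * exp (b * l3)) - 3)"
  define f'' where "f'' = (\<lambda>b. (4 + (2*b+10) * l2) * (l2 * exp (b * l2)) - (4 + (2*b+2) * l3) * (l3 * exp (b * l3)))"
  have d1: "DERIV f x :> f' x" for x
    unfolding f_def f'_def by (auto intro!: derivative_eq_intros simp: algebra_simps)
  have d2: "DERIV f' x :> f'' x" for x
    unfolding f'_def f''_def by (auto intro!: derivative_eq_intros simp: algebra_simps)
  note l = ln_bounds[folded l2_def l3_def]
  have neg: "f'' x \<le> 0" if x: "x \<in> {67/107..1}" for x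
  proof -
    have E: "exp (x * l3) \<ge> (1 + 67/107 * (29/50) * (2/3)) * exp (x * l2)"
      using E3_ge[of x] x unfolding l2_def l3_def by auto
    have A: "4 + (2*x+10) * l2 \<le> 37/3"
    proof -
      have "(2*x+10) * l2 \<le> 12 * (25/36)" using x l by (intro mult_mono) auto
      then show ?thesis by simp
    qed
    have B: "4 + (2*x+2) * l3 \<ge> 4 + (2*(67/107) + 2) * (79/50 * (2/3))"
    proof -
      have "(2*x+2) * l3 \<ge> (2*(67/107) + 2) * (79/50 * (2/3))" using x l by (intro mult_mono) auto
      then show ?thesis by simp
    qed
    have l3p: "l3 \<ge> 79/50 * l2" using l by simp
    have e2: "exp (x * l2) > 0" by simp
    have "(4 + (2*x+2) * l3) * (l3 * exp (x * l3)) \<ge>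
          (4 + (2*(67/107) + 2) * (79/50 * (2/3))) * ((79/50 * l2) * ((1 + 67/107 * (29/50) * (2/3)) * exp (x * l2)))"
      using B l3p E l e2 by (intro mult_mono) auto
    moreover have "(4 + (2*x+10) * l2) * (l2 * exp (x * l2)) \<le> 37/3 * (l2 * exp (x * l2))"
      using A l e2 by (intro mult_right_mono) auto
    moreover have "37/3 * (l2 * exp (x * l2)) \<le> (4 + (2*(67/107) + 2) * (79/50 * (2/3))) * ((79/50 * l2) * ((1 + 67/107 * (29/50) * (2/3)) * exp (x * l2)))"
    proof -
      have "l2 * exp (x * l2) \<ge> 0" using l e2 by simp
      then have "37/3 * (l2 * exp (x * l2)) \<le> ((4 + (2*(67/107) + 2) * (79/50 * (2/3))) * (79/50) * (1 + 67/107 * (29/50) * (2/3))) * (l2 * exp (x * l2))"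
        by (intro mult_right_mono) auto
      then show ?thesis by (simp add: algebra_simps)
    qed
    ultimately show ?thesis unfolding f''_def by linarith
  qed
  have fp: "f (67/107) > 0"
  proof -
    have x: "exp (67/107 * l2) \<ge> 15434601/10000000" using X_lower unfolding l2_def by (simp add: powr_def)
    have y: "exp (67/107 * l3) \<le> 4973913/2500000" using Y_upper unfolding l3_def by (simp add: powr_def)
    have "(2*(67/107)+10) * exp (67/107 * l2) \<ge> (2*(67/107)+10) * (15434601/10000000)" using x by (intro mult_left_mono) auto
    moreover have "(2*(67/107)+2) * exp (67/107 * l3) \<le> (2*(67/107)+2) * (4973913/2500000)" using y by (intro mult_left_mono) auto
    ultimately show ?thesis unfolding f_def by simp
  qed
  have f1: "f 1 = 0" unfolding f_def l2_def l3_def by simp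
  have "f b > 0" by (rule concave_pos[of "67/107" f f' f'', OF _ d1 d2 neg fp f1 b]) auto
  then show ?thesis unfolding f_def l2_def l3_def by (simp add: powr_def)
qed


lemma V1:
  fixes b :: real assumes b: "67/107 \<le> b" "b < 1"
  shows "2 powr b - 1 - (1 - b) / (2 * (b + 1)) > 0"
proof -
  have "2 powr b = exp (b * ln 2)" by (simp add: powr_def)
  also have "\<dots> \<ge> 1 + b * ln 2" by (rule exp_ge_add_one_self)
  finally have e: "2 powr b \<ge> 1 + b * ln 2" .
  have "b * ln 2 \<ge> 67/107 * (2/3)" using b ln2_ge_two_thirds by (intro mult_mono) auto
  moreover have "(1 - b) / (2 * (b + 1)) \<le> 1/4" using b by (simp add: divide_simps)
  ultimately show ?thesis using e by linarith
qed

lemma V2: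
  fixes b :: real assumes b: "0 \<le> b" "b < 1"
  shows "b + 3 - (b + 1) * 2 powr b > 0"
proof -
  have "(b + 1) * 2 powr b \<le> (b + 1) * (1 + b)" using two_powr_le[of b] b by (intro mult_left_mono) auto
  moreover have "(b + 1) * (1 + b) < b + 3"
  proof -
    have "b * b < 1 * 1" using b by (intro mult_strict_mono) auto
    then show ?thesis using b by (simp add: algebra_simps)
  qed
  ultimately show ?thesis by linarith
qed

lemma V4:
  fixes b :: real assumes b: "0 \<le> b" "b < 1"
  shows "3 * b + 9 - (b + 5) * 2 powr b > 0"
proof -
  have "(b + 5) * 2 powr b \<le> (b + 5) * (1 + b)" using two_powr_le[of b] b by (intro mult_left_mono) auto
  moreover have "(b + 5) * (1 + b) < 3 * b + 9"
  proof -
    have "b * b < 1 * 1" using b by (intro mult_strict_mono) auto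
    then show ?thesis using b by (simp add: algebra_simps)
  qed
  ultimately show ?thesis by linarith
qed

lemma powr2m: "(x::real) > 0 \<Longrightarrow> x powr (2 - \<alpha>) = x * x powr (1 - \<alpha>)"
proof -
  assume x: "x > 0"
  have "x powr (1 + (1 - \<alpha>)) = x powr 1 * x powr (1 - \<alpha>)" by (rule powr_add)
  then show ?thesis using x by simp
qed

definition cn :: "real \<Rightarrow> (nat \<Rightarrow> real) \<Rightarrow> nat \<Rightarrow> nat \<Rightarrow> real" where
  "cn \<alpha> v i k =
    (if k = 1 then av \<alpha> v 1
     else if i = 1 then av \<alpha> v 1 + bv \<alpha> v 2
     else if i = k then av \<alpha> v k - bv \<alpha> v k
     else av \<alpha> v i - bv \<alpha> v i + bv \<alpha> v (i + 1))
    / (v (i - 1) - v i)"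

lemma cv_cn: "cv \<alpha> v i k = cn \<alpha> v i k / Gamma (2 - \<alpha>)"
  unfolding cv_def cn_def by (simp add: field_simps)

lemma lim_P1: "\<alpha> < 2 \<Longrightarrow> cn \<alpha> (\<lambda>j. real (2 - j)) 1 2 = 2 powr (1 - \<alpha>) - 1 - \<alpha> / (2 * (2 - \<alpha>))"
  unfolding cn_def av_def bv_def by (simp add: powr2m field_simps)

lemma lim_P2: "\<alpha> < 2 \<Longrightarrow> cn \<alpha> (\<lambda>j. real (2 - j)) 2 2 - cn \<alpha> (\<lambda>j. real (2 - j)) 1 2
   = ((1 - \<alpha>) + 3 - (2 - \<alpha>) * 2 powr (1 - \<alpha>)) / (2 - \<alpha>)"
proof -
  assume a: "\<alpha> < 2"
  define d where "d = 2 - \<alpha>"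
  have d: "d > 0" "\<alpha> = 2 - d" using a unfolding d_def by auto
  have e: "2 - (2 - d) = d" "1 - (2 - d) = d - 1" by simp_all
  have p: "(2::real) powr d = 2 * 2 powr (d - 1)" "(3::real) powr d = 3 * 3 powr (d - 1)"
    using powr2m[of 2 "2 - d"] powr2m[of 3 "2 - d"] by simp_all
  show ?thesis unfolding cn_def av_def bv_def d(2) e using d(1) by (simp add: p field_simps)
qed

lemma lim_P3: "\<alpha> < 2 \<Longrightarrow> cn \<alpha> (\<lambda>j. real (3 - j)) 2 3 - cn \<alpha> (\<lambda>j. real (3 - j)) 1 3
   = ((2*(1-\<alpha>)+10) * 2 powr (1 - \<alpha>) - (2*(1-\<alpha>)+2) * 3 powr (1 - \<alpha>) - 3*(1-\<alpha>) - 9) / (2 * (2 - \<alpha>))"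
proof -
  assume a: "\<alpha> < 2"
  define d where "d = 2 - \<alpha>"
  have d: "d > 0" "\<alpha> = 2 - d" using a unfolding d_def by auto
  have e: "2 - (2 - d) = d" "1 - (2 - d) = d - 1" by simp_all
  have p: "(2::real) powr d = 2 * 2 powr (d - 1)" "(3::real) powr d = 3 * 3 powr (d - 1)"
    using powr2m[of 2 "2 - d"] powr2m[of 3 "2 - d"] by simp_all
  show ?thesis unfolding cn_def av_def bv_def d(2) e using d(1) by (simp add: p field_simps)
qed

lemma lim_P4: "\<alpha> < 2 \<Longrightarrow> cn \<alpha> (\<lambda>j. real (3 - j)) 3 3 - cn \<alpha> (\<lambda>j. real (3 - j)) 2 3
   = (3*(1-\<alpha>) + 9 - ((1-\<alpha>)+5) * 2 powr (1 - \<alpha>)) / (2 * (2 - \<alpha>))"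
proof -
  assume a: "\<alpha> < 2"
  define d where "d = 2 - \<alpha>"
  have d: "d > 0" "\<alpha> = 2 - d" using a unfolding d_def by auto
  have e: "2 - (2 - d) = d" "1 - (2 - d) = d - 1" by simp_all
  have p: "(2::real) powr d = 2 * 2 powr (d - 1)" "(3::real) powr d = 3 * 3 powr (d - 1)"
    using powr2m[of 2 "2 - d"] powr2m[of 3 "2 - d"] by simp_all
  show ?thesis unfolding cn_def av_def bv_def d(2) e using d(1) by (simp add: p field_simps)
qed

lemma lim_P5: "\<alpha> < 2 \<Longrightarrow> cn \<alpha> (\<lambda>j. real (4 - j)) 3 4 - cn \<alpha> (\<lambda>j. real (4 - j)) 2 4
   = ((3*(1-\<alpha>)+15) * 2 powr (1 - \<alpha>) - ((1-\<alpha>)+7) * 3 powr (1 - \<alpha>) - 3*(1-\<alpha>) - 9) / (2 * (2 - \<alpha>))"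
proof -
  assume a: "\<alpha> < 2"
  define d where "d = 2 - \<alpha>"
  have d: "d > 0" "\<alpha> = 2 - d" using a unfolding d_def by auto
  have e: "2 - (2 - d) = d" "1 - (2 - d) = d - 1" by simp_all
  have p: "(2::real) powr d = 2 * 2 powr (d - 1)" "(3::real) powr d = 3 * 3 powr (d - 1)"
    using powr2m[of 2 "2 - d"] powr2m[of 3 "2 - d"] by simp_all
  show ?thesis unfolding cn_def av_def bv_def d(2) e using d(1) by (simp add: p field_simps)
qed

lemma near_from_lim:
  fixes f :: "real \<Rightarrow> real"
  assumes "(f \<longlongrightarrow> L) (at_right 0)" "L > 0"
  shows "\<exists>e>0. \<forall>\<epsilon>. 0 < \<epsilon> \<longrightarrow> \<epsilon> < e \<longrightarrow> f \<epsilon> > 0"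
proof -
  have "eventually (\<lambda>\<epsilon>. f \<epsilon> > 0) (at_right 0)" using order_tendstoD(1)[OF assms] .
  then obtain b where "b > 0" "\<forall>y>0. y < b \<longrightarrow> f y > 0" unfolding eventually_at_right_field by auto
  then show ?thesis by auto
qed

lemma alpha_b: "0 < \<alpha> \<Longrightarrow> \<alpha> < 0.3738 \<Longrightarrow> 67/107 \<le> 1 - (\<alpha>::real) \<and> 1 - \<alpha> < 1 \<and> \<alpha> < 2 \<and> 0 \<le> 1 - \<alpha>"
  by simp

lemma Gpos: "\<alpha> < 2 \<Longrightarrow> Gamma (2 - \<alpha>) > (0::real)"
  by (intro Gamma_real_pos) simp

lemma near_P1:
  assumes "0 < \<alpha>" "\<alpha> < 0.3738"
  shows "\<exists>e>0. \<forall>\<epsilon>. 0 < \<epsilon> \<longrightarrow> \<epsilon> < e \<longrightarrow> cv \<alpha> (W 2 \<epsilon>) 1 2 > 0"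
proof (rule near_from_lim)
  note ab = alpha_b[OF assms]
  show "((\<lambda>\<epsilon>. cv \<alpha> (W 2 \<epsilon>) 1 2) \<longlongrightarrow> cv \<alpha> (\<lambda>j. real (2 - j)) 1 2) (at_right 0)"
    using assms by (intro cv_tendsto_W) auto
  have "2 powr (1 - \<alpha>) - 1 - (1 - (1 - \<alpha>)) / (2 * ((1 - \<alpha>) + 1)) > 0" using V1 ab by blast
  then have "cn \<alpha> (\<lambda>j. real (2 - j)) 1 2 > 0" using lim_P1[of \<alpha>] ab by simp
  then show "cv \<alpha> (\<lambda>j. real (2 - j)) 1 2 > 0" unfolding cv_cn using Gpos[of \<alpha>] ab by simp
qed

lemma near_P2:
  assumes "0 < \<alpha>" "\<alpha> < 0.3738"
  shows "\<exists>e>0. \<forall>\<epsilon>. 0 < \<epsilon> \<longrightarrow> \<epsilon> < e \<longrightarrow> cv \<alpha> (W 2 \<epsilon>) 2 2 - cv \<alpha> (W 2 \<epsilon>) 1 2 > 0"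
proof (rule near_from_lim)
  note ab = alpha_b[OF assms]
  show "((\<lambda>\<epsilon>. cv \<alpha> (W 2 \<epsilon>) 2 2 - cv \<alpha> (W 2 \<epsilon>) 1 2) \<longlongrightarrow> cv \<alpha> (\<lambda>j. real (2 - j)) 2 2 - cv \<alpha> (\<lambda>j. real (2 - j)) 1 2) (at_right 0)"
    using assms by (intro tendsto_diff cv_tendsto_W) auto
  have "(1 - \<alpha>) + 3 - ((1 - \<alpha>) + 1) * 2 powr (1 - \<alpha>) > 0" using V2 ab by blast
  then have "cn \<alpha> (\<lambda>j. real (2 - j)) 2 2 - cn \<alpha> (\<lambda>j. real (2 - j)) 1 2 > 0" using lim_P2[of \<alpha>] ab by simp
  then show "cv \<alpha> (\<lambda>j. real (2 - j)) 2 2 - cv \<alpha> (\<lambda>j. real (2 - j)) 1 2 > 0"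
    unfolding cv_cn using Gpos[of \<alpha>] ab by (simp add: diff_divide_distrib[symmetric])
qed

lemma near_P3:
  assumes "0 < \<alpha>" "\<alpha> < 0.3738"
  shows "\<exists>e>0. \<forall>\<epsilon>. 0 < \<epsilon> \<longrightarrow> \<epsilon> < e \<longrightarrow> cv \<alpha> (W 3 \<epsilon>) 2 3 - cv \<alpha> (W 3 \<epsilon>) 1 3 > 0"
proof (rule near_from_lim)
  note ab = alpha_b[OF assms]
  show "((\<lambda>\<epsilon>. cv \<alpha> (W 3 \<epsilon>) 2 3 - cv \<alpha> (W 3 \<epsilon>) 1 3) \<longlongrightarrow> cv \<alpha> (\<lambda>j. real (3 - j)) 2 3 - cv \<alpha> (\<lambda>j. real (3 - j)) 1 3) (at_right 0)"
    using assms by (intro tendsto_diff cv_tendsto_W) auto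
  have "(2*(1-\<alpha>)+10) * 2 powr (1 - \<alpha>) - (2*(1-\<alpha>)+2) * 3 powr (1 - \<alpha>) - 3*(1-\<alpha>) - 9 > 0" using V3 ab by blast
  then have "cn \<alpha> (\<lambda>j. real (3 - j)) 2 3 - cn \<alpha> (\<lambda>j. real (3 - j)) 1 3 > 0" using lim_P3[of \<alpha>] ab by simp
  then show "cv \<alpha> (\<lambda>j. real (3 - j)) 2 3 - cv \<alpha> (\<lambda>j. real (3 - j)) 1 3 > 0"
    unfolding cv_cn using Gpos[of \<alpha>] ab by (simp add: diff_divide_distrib[symmetric])
qed

lemma near_P4:
  assumes "0 < \<alpha>" "\<alpha> < 0.3738"
  shows "\<exists>e>0. \<forall>\<epsilon>. 0 < \<epsilon> \<longrightarrow> \<epsilon> < e \<longrightarrow> cv \<alpha> (W 3 \<epsilon>) 3 3 - cv \<alpha> (W 3 \<epsilon>) 2 3 > 0"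
proof (rule near_from_lim)
  note ab = alpha_b[OF assms]
  show "((\<lambda>\<epsilon>. cv \<alpha> (W 3 \<epsilon>) 3 3 - cv \<alpha> (W 3 \<epsilon>) 2 3) \<longlongrightarrow> cv \<alpha> (\<lambda>j. real (3 - j)) 3 3 - cv \<alpha> (\<lambda>j. real (3 - j)) 2 3) (at_right 0)"
    using assms by (intro tendsto_diff cv_tendsto_W) auto
  have "3*(1-\<alpha>) + 9 - ((1-\<alpha>)+5) * 2 powr (1 - \<alpha>) > 0" using V4 ab by blast
  then have "cn \<alpha> (\<lambda>j. real (3 - j)) 3 3 - cn \<alpha> (\<lambda>j. real (3 - j)) 2 3 > 0" using lim_P4[of \<alpha>] ab by simp
  then show "cv \<alpha> (\<lambda>j. real (3 - j)) 3 3 - cv \<alpha> (\<lambda>j. real (3 - j)) 2 3 > 0"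
    unfolding cv_cn using Gpos[of \<alpha>] ab by (simp add: diff_divide_distrib[symmetric])
qed

lemma near_P5:
  assumes "0 < \<alpha>" "\<alpha> < 0.3738"
  shows "\<exists>e>0. \<forall>\<epsilon>. 0 < \<epsilon> \<longrightarrow> \<epsilon> < e \<longrightarrow> cv \<alpha> (W 4 \<epsilon>) 3 4 - cv \<alpha> (W 4 \<epsilon>) 2 4 > 0"
proof (rule near_from_lim)
  note ab = alpha_b[OF assms]
  show "((\<lambda>\<epsilon>. cv \<alpha> (W 4 \<epsilon>) 3 4 - cv \<alpha> (W 4 \<epsilon>) 2 4) \<longlongrightarrow> cv \<alpha> (\<lambda>j. real (4 - j)) 3 4 - cv \<alpha> (\<lambda>j. real (4 - j)) 2 4) (at_right 0)"
    using assms by (intro tendsto_diff cv_tendsto_W) auto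
  have "(3*(1-\<alpha>)+15) * 2 powr (1 - \<alpha>) - ((1-\<alpha>)+7) * 3 powr (1 - \<alpha>) - 3*(1-\<alpha>) - 9 > 0" using V5 ab by blast
  then have "cn \<alpha> (\<lambda>j. real (4 - j)) 3 4 - cn \<alpha> (\<lambda>j. real (4 - j)) 2 4 > 0" using lim_P5[of \<alpha>] ab by simp
  then show "cv \<alpha> (\<lambda>j. real (4 - j)) 3 4 - cv \<alpha> (\<lambda>j. real (4 - j)) 2 4 > 0"
    unfolding cv_cn using Gpos[of \<alpha>] ab by (simp add: diff_divide_distrib[symmetric])
qed

lemma ln_lower: "0 < x \<Longrightarrow> x / (1 + x) \<le> ln (1 + (x::real))"
proof -
  assume x: "0 < x"
  have "ln (1 / (1 + x)) \<le> 1 / (1 + x) - 1" using x by (intro ln_le_minus_one) auto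
  then have "- ln (1 + x) \<le> 1 / (1 + x) - 1" using x by (simp add: ln_div)
  moreover have "1 / (1 + x) - 1 = - (x / (1 + x))" using x by (simp add: field_simps)
  ultimately show ?thesis by linarith
qed

lemma ln_upper: "0 < x \<Longrightarrow> ln (1 + (x::real)) \<le> x"
  using ln_le_minus_one[of "1 + x"] by simp

locale mesh =
  fixes a \<tau> :: real and t :: "nat \<Rightarrow> real" and k :: nat
  assumes a: "a > 0" and tau: "\<tau> > 0" and tau_small: "60 * \<tau> \<le> a"
    and t_def: "\<And>j. t j = a + real j * \<tau>"
begin

definition v where "v j = ln (t k / t j)"
definition s where "s j = ln (1 + \<tau> / t j)"

lemma tpos: "t j > 0" using a tau t_def[of j] by (smt (verit) of_nat_0_le_iff mult_nonneg_nonneg)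
lemma tge: "t j \<ge> a" using tau t_def[of j] by simp
lemma tSuc: "t (Suc j) = t j + \<tau>" using t_def[of j] t_def[of "Suc j"] by (simp add: algebra_simps)

lemma v_alt: "v j = ln (t k) - ln (t j)" unfolding v_def using tpos[of k] tpos[of j] by (simp add: ln_div)
lemma v_step: "v j - v (Suc j) = s j"
proof -
  have "ln (t (Suc j)) - ln (t j) = ln (t (Suc j) / t j)" using tpos[of j] tpos[of "Suc j"] by (simp add: ln_div)
  also have "t (Suc j) / t j = 1 + \<tau> / t j" using tpos[of j] by (simp add: tSuc field_simps)
  finally show ?thesis unfolding v_alt s_def by simp
qed
lemma s_pos: "s j > 0" unfolding s_def using tpos[of j] tau by (intro ln_gt_zero) simp
lemma t_mono: "i \<le> j \<Longrightarrow> t i \<le> t j" using tau unfolding t_def by (simp add: mult_right_mono)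
lemma s_mono: "i \<le> j \<Longrightarrow> s j \<le> s i"
  unfolding s_def using tpos[of i] tpos[of j] t_mono[of i j] tau
  by (subst ln_le_cancel_iff) (auto simp: divide_left_mono add_pos_pos)
lemma s_ratio: "s j \<le> 21/20 * s (j + 2)"
proof -
  have t2: "t (j + 2) = t j + 2 * \<tau>" using t_def[of j] t_def[of "j+2"] by (simp add: algebra_simps)
  have "s j \<le> \<tau> / t j" unfolding s_def using tau tpos[of j] by (intro ln_upper) simp
  moreover have "s (j + 2) \<ge> (\<tau> / t (j+2)) / (1 + \<tau> / t (j+2))" unfolding s_def using tau tpos[of "j+2"] by (intro ln_lower) simp
  moreover have "(\<tau> / t (j+2)) / (1 + \<tau> / t (j+2)) = \<tau> / (t j + 3 * \<tau>)"
  proof -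
    have p: "t (j+2) > 0" "t (j+2) + \<tau> > 0" using tpos[of "j+2"] tau by auto
    have "(\<tau> / t (j+2)) / (1 + \<tau> / t (j+2)) = \<tau> / (t (j+2) + \<tau>)" using p by (simp add: field_simps)
    then show ?thesis unfolding t2 by (simp add: algebra_simps)
  qed
  moreover have "\<tau> / t j \<le> 21/20 * (\<tau> / (t j + 3 * \<tau>))"
    using tge[of j] tau_small tau tpos[of j] by (simp add: field_simps)
  ultimately show ?thesis by linarith
qed
lemma v_k: "v k = 0" unfolding v_def using tpos[of k] by simp
lemma v_nonneg: "j \<le> k \<Longrightarrow> v j \<ge> 0" unfolding v_def using tpos t_mono[of j k] by simp
lemma v_ge_s: "j < k \<Longrightarrow> v j \<ge> s j" using v_step[of j] v_nonneg[of "Suc j"] by simp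
lemma v_pos: "j < k \<Longrightarrow> v j > 0" using v_ge_s s_pos by (meson less_le_trans)

lemma ratio_pow:
  fixes \<alpha> x y :: real
  assumes al: "0 < \<alpha>" "\<alpha> \<le> 1/2" and x: "0 < x" "x \<le> y" "y \<le> 31/10 * x"
  shows "x powr (- \<alpha> - 1) < 6 * y powr (- \<alpha> - 1)"
proof -
  have "y powr (- \<alpha> - 1) \<ge> (31/10 * x) powr (- \<alpha> - 1)" using x al by (intro powr_mono2') auto
  moreover have "(31/10 * x) powr (- \<alpha> - 1) = (31/10) powr (- \<alpha> - 1) * x powr (- \<alpha> - 1)"
    using x by (subst powr_mult) auto
  moreover have "(31/10::real) powr (- \<alpha> - 1) \<ge> (31/10) powr (- 3/2)" using al by (intro powr_mono) auto
  moreover have "(31/10::real) powr (- 3/2) > 1/6"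
  proof -
    have "(31/10::real) powr (3/2) = ((31/10)^3) powr (1/2)" using powr_frac[of "31/10" 3 2] by (simp only: of_nat_numeral)
    also have "\<dots> = sqrt ((31/10)^3)" by (simp add: powr_half_sqrt)
    also have "\<dots> < 6" by (rule real_less_lsqrt) (simp_all add: power3_eq_cube)
    finally have "(31/10::real) powr (3/2) < 6" .
    moreover have "(31/10::real) powr (- 3/2) = 1 / (31/10) powr (3/2)" by (simp add: powr_minus_divide)
    moreover have "1 / (31/10::real) powr (3/2) > 1/6"
      using \<open>(31/10::real) powr (3/2) < 6\<close> by (simp add: divide_simps)
    ultimately show ?thesis by simp
  qed
  moreover have "x powr (- \<alpha> - 1) > 0" using x by simp
  ultimately have "y powr (- \<alpha> - 1) > 1/6 * x powr (- \<alpha> - 1)"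
  proof -
    assume h: "(31 / 10 * x) powr (- \<alpha> - 1) \<le> y powr (- \<alpha> - 1)"
      "(31 / 10 * x) powr (- \<alpha> - 1) = (31 / 10) powr (- \<alpha> - 1) * x powr (- \<alpha> - 1)"
      "(31 / 10) powr (- 3 / 2) \<le> (31 / 10::real) powr (- \<alpha> - 1)" "1/6 < (31 / 10::real) powr (- 3 / 2)"
      "0 < x powr (- \<alpha> - 1)"
    have q: "1/6 < (31 / 10::real) powr (- \<alpha> - 1)" using h(3) h(4) by linarith
    have "1/6 * x powr (- \<alpha> - 1) < (31 / 10) powr (- \<alpha> - 1) * x powr (- \<alpha> - 1)"
      by (rule mult_strict_right_mono[OF q h(5)])
    then show ?thesis using h(1,2) by linarith
  qed
  then show ?thesis by simp
qed


lemma vstep': "1 \<le> j \<Longrightarrow> v (j - 1) - v j = s (j - 1)"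
  using v_step[of "j - 1"] by simp

lemma far_mesh:
  assumes al: "0 < \<alpha>" "\<alpha> < 0.3738" and i: "2 \<le> i" "i + 2 \<le> k"
  shows "cv \<alpha> v (i - 1) k < cv \<alpha> v i k"
proof (rule far_cv)
  show "0 < \<alpha>" "\<alpha> < 1" using al by auto
  show "2 \<le> i" "i + 1 \<le> k" using i by auto
  have st: "v i - v (i+1) = s i" "v (i-1) - v i = s (i-1)" "v (i-2) - v (i-1) = s (i-2)"
    using v_step[of i] vstep'[of i] vstep'[of "i-1"] i by (simp_all add: numeral_2_eq_2)
  have st3: "i \<ge> 3 \<Longrightarrow> v (i-3) - v (i-2) = s (i-3)"
    using vstep'[of "i-2"] by (simp add: numeral_2_eq_2 numeral_3_eq_3)
  show vp: "0 < v (i+1)" using v_pos[of "i+1"] i by simp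
  show "v (i+1) < v i" "v i < v (i-1)" "v (i-1) < v (i-2)" using st s_pos[of i] s_pos[of "i-1"] s_pos[of "i-2"] by auto
  show "i \<ge> 3 \<Longrightarrow> v (i-2) < v (i-3)" using st3 s_pos[of "i-3"] by auto
  show "v i - v (i+1) \<le> v (i-1) - v i" using st s_mono[of "i-1" i] by simp
  have m3: "s (i-2) \<le> s (i-3)" by (rule s_mono) simp
  show "i \<ge> 3 \<Longrightarrow> v (i-2) - v (i-1) \<le> v (i-3) - v (i-2)" using st st3 m3 by simp
  have vs: "v (i+1) \<ge> s (i+1)" using v_ge_s[of "i+1"] i by simp
  have r: "s (i-1) \<le> 21/20 * s (i+1)" using s_ratio[of "i-1"] i by (simp add: numeral_2_eq_2)
  have m: "s i \<le> s (i-1)" using s_mono[of "i-1" i] by simp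
  show "v (i+1) powr (-\<alpha>-1) < 6 * v (i-1) powr (-\<alpha>-1)"
    using vp st vs r m s_pos[of i] s_pos[of "i-1"] al by (intro ratio_pow) auto
  have vs2: "v (i-1) \<ge> s i"
  proof -
    have "v (i-1) \<ge> s (i-1)" using v_ge_s[of "i-1"] i by simp
    then show ?thesis using m by simp
  qed
  have e2: "i - 2 + 2 = i" using i by simp
  have r2: "s (i-2) \<le> 21/20 * s i" using s_ratio[of "i-2"] unfolding e2 .
  have "v (i-1) powr (-\<alpha>-1) < 6 * v (i-2) powr (-\<alpha>-1)"
    using vp st vs2 r2 s_pos[of i] s_pos[of "i-1"] s_pos[of "i-2"] al by (intro ratio_pow) auto
  then show "v (i-1) powr (-\<alpha>-1) \<le> 6 * v (i-2) powr (-\<alpha>-1)" by simp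
qed

lemma c1_mesh:
  assumes al: "0 < \<alpha>" "\<alpha> < 0.3738" and k: "3 \<le> k"
  shows "cv \<alpha> v 1 k > 0"
proof (rule c1_cv)
  show "0 < \<alpha>" "\<alpha> < 1" "3 \<le> k" using al k by auto
  have st: "v 0 - v 1 = s 0" "v 1 - v 2 = s 1" using v_step[of 0] v_step[of 1] by (simp_all add: numeral_2_eq_2)
  show v2: "0 < v 2" using v_pos[of 2] k by simp
  show "v 2 < v 1" "v 1 < v 0" using st s_pos[of 0] s_pos[of 1] by auto
  show "v 1 - v 2 \<le> v 0 - v 1" using st s_mono[of 0 1] by simp
  have vs: "v 2 \<ge> s 2" using v_ge_s[of 2] k by simp
  have r: "s 0 \<le> 21/20 * s 2" using s_ratio[of 0] by (simp add: numeral_2_eq_2)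
  have m: "s 1 \<le> s 0" using s_mono[of 0 1] by simp
  show "v 0 \<le> 31/10 * v 2" using st vs r m by simp
  show "v 1 - v 2 \<le> 21/20 * v 2" using st vs r m by simp
qed

definition eps where "eps = \<tau> / t (k - 1)"

lemma eps_pos: "eps > 0" unfolding eps_def using tau tpos by simp
lemma eps_le: "eps \<le> \<tau> / a" unfolding eps_def using tau a tge[of "k-1"] tpos[of "k-1"]
  by (simp add: divide_left_mono)

lemma v_Y:
  assumes k1: "1 \<le> k" and n: "n \<le> k"
  shows "v (k - n) = s (k - 1) * Y eps n"
proof -
  have sk: "s (k - 1) = ln (1 + eps)" unfolding s_def eps_def ..
  have sp: "s (k - 1) > 0" by (rule s_pos)
  show ?thesis
  proof (cases "n = 0")
    case True then show ?thesis using v_k by (simp add: Y_def)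
  next
    case n0: False
    show ?thesis
    proof (cases "n = 1")
      case True then show ?thesis using vstep'[of k] k1 v_k by (simp add: Y_def)
    next
      case False
      have tk: "t k = t (k-1) + \<tau>" using tSuc[of "k-1"] k1 by simp
      have tkn: "t (k - n) = t (k-1) - (real n - 1) * \<tau>"
        using t_def[of "k-n"] t_def[of "k-1"] n k1 n0 by (simp add: of_nat_diff algebra_simps)
      have tp: "t (k-1) > 0" "t (k-n) > 0" using tpos by auto
      have q: "t k / t (k - n) = (1 + eps) / (1 - (real n - 1) * eps)"
      proof -
        have e1: "1 + eps = (t (k-1) + \<tau>) / t (k-1)" unfolding eps_def using tp by (simp add: field_simps)
        have e2: "1 - (real n - 1) * eps = t (k - n) / t (k-1)" unfolding eps_def tkn using tp by (simp add: field_simps)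
        show ?thesis unfolding e1 e2 tk using tp by simp
      qed
      have "Y eps n = ln ((1 + eps) / (1 - (real n - 1) * eps)) / s (k - 1)"
        using n0 False unfolding Y_def sk by simp
      then show ?thesis using sp unfolding v_def q by simp
    qed
  qed
qed

lemma near_eq:
  assumes K: "2 \<le> K" "K \<le> k" and i: "1 \<le> i'" "i' \<le> K" and d: "k - K = 0 \<or> 2 \<le> i'"
  shows "cv \<alpha> v (i' + (k - K)) k = s (k - 1) powr (- \<alpha>) * cv \<alpha> (W K eps) i' K"
proof -
  define d where "d = k - K"
  have sp: "s (k - 1) > 0" by (rule s_pos)
  have vW: "v (j + d) = s (k - 1) * W K eps j" if "j \<le> K" for j
  proof -
    have "k - (K - j) = j + d" using that K unfolding d_def by simp
    then show ?thesis using v_Y[of "K - j"] that K unfolding W_def by simp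
  qed
  have Wn: "W K eps j \<ge> 0" if "j \<le> K" for j
  proof -
    have "v (j + d) \<ge> 0" using v_nonneg[of "j + d"] that K unfolding d_def by simp
    then show ?thesis using vW[OF that] sp by (simp add: zero_le_mult_iff)
  qed
  have "cv \<alpha> v (i' + d) k = cv \<alpha> (\<lambda>j. v (j + d)) i' K"
  proof (cases "d = 0")
    case True
    then have "k = K" using K unfolding d_def by simp
    then show ?thesis using True by simp
  next
    case False
    then have "2 \<le> i'" using d unfolding d_def by simp
    then have "cv \<alpha> v (i' + d) k = cv \<alpha> (\<lambda>j. v (j + d)) (i' + d - d) (k - d)"
      using i K unfolding d_def by (intro cv_shift) auto
    moreover have "k - d = K" using K unfolding d_def by simp
    ultimately show ?thesis by simp
  qed
  also have "\<dots> = cv \<alpha> (\<lambda>j. s (k - 1) * W K eps j) i' K"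
    using i vW by (intro cv_cong) auto
  also have "\<dots> = s (k - 1) powr (- \<alpha>) * cv \<alpha> (W K eps) i' K"
    using sp Wn i by (intro cv_scale) auto
  finally show ?thesis unfolding d_def .
qed

end


theorem lemma2p5:
  fixes a T \<alpha> :: real
  assumes "a > 0" and "T > a" and "0 < \<alpha>" and "\<alpha> < 0.3738"
  shows "\<exists>\<tau>0 > 0. \<forall>N::nat. N > 0 \<longrightarrow> (T - a) / real N < \<tau>0 \<longrightarrow>
           (\<forall>k. 2 \<le> k \<and> k \<le> N \<longrightarrow>
              ccoef \<alpha> (grid a T N) 1 k > 0 \<and>
              (\<forall>i. 2 \<le> i \<and> i \<le> k \<longrightarrow>
                 ccoef \<alpha> (grid a T N) i k > ccoef \<alpha> (grid a T N) (i - 1) k))"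
proof -
  note al = assms(3,4)
  have a0: "a > 0" using assms(1) .
  obtain e1 where e1: "e1 > 0" "\<And>\<epsilon>. 0 < \<epsilon> \<Longrightarrow> \<epsilon> < e1 \<Longrightarrow> cv \<alpha> (W 2 \<epsilon>) 1 2 > 0"
    using near_P1[OF al] by blast
  obtain e2 where e2: "e2 > 0" "\<And>\<epsilon>. 0 < \<epsilon> \<Longrightarrow> \<epsilon> < e2 \<Longrightarrow> cv \<alpha> (W 2 \<epsilon>) 2 2 - cv \<alpha> (W 2 \<epsilon>) 1 2 > 0"
    using near_P2[OF al] by blast
  obtain e3 where e3: "e3 > 0" "\<And>\<epsilon>. 0 < \<epsilon> \<Longrightarrow> \<epsilon> < e3 \<Longrightarrow> cv \<alpha> (W 3 \<epsilon>) 2 3 - cv \<alpha> (W 3 \<epsilon>) 1 3 > 0"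
    using near_P3[OF al] by blast
  obtain e4 where e4: "e4 > 0" "\<And>\<epsilon>. 0 < \<epsilon> \<Longrightarrow> \<epsilon> < e4 \<Longrightarrow> cv \<alpha> (W 3 \<epsilon>) 3 3 - cv \<alpha> (W 3 \<epsilon>) 2 3 > 0"
    using near_P4[OF al] by blast
  obtain e5 where e5: "e5 > 0" "\<And>\<epsilon>. 0 < \<epsilon> \<Longrightarrow> \<epsilon> < e5 \<Longrightarrow> cv \<alpha> (W 4 \<epsilon>) 3 4 - cv \<alpha> (W 4 \<epsilon>) 2 4 > 0"
    using near_P5[OF al] by blast
  define e where "e = min e1 (min e2 (min e3 (min e4 e5)))"
  have ep: "e > 0" unfolding e_def using e1 e2 e3 e4 e5 by simp
  define \<tau>0 where "\<tau>0 = min (a / 60) (a * e)"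
  have t0: "\<tau>0 > 0" unfolding \<tau>0_def using ep assms(1) by simp
  show ?thesis
  proof (intro exI[of _ \<tau>0] conjI allI impI)
    show "\<tau>0 > 0" by (rule t0)
    fix N :: nat and k :: nat
    assume N: "N > 0" "(T - a) / real N < \<tau>0" and k: "2 \<le> k \<and> k \<le> N"
    define \<tau> where "\<tau> = (T - a) / real N"
    have taup: "\<tau> > 0" unfolding \<tau>_def using N assms by simp
    have "\<tau> < a / 60" using N(2) unfolding \<tau>_def \<tau>0_def by linarith
    then have tsm: "60 * \<tau> \<le> a" by simp
    have gd: "grid a T N j = a + real j * \<tau>" for j unfolding grid_def \<tau>_def ..
    interpret m: mesh a \<tau> "grid a T N" k
      by (rule mesh.intro[OF a0 taup tsm gd])
    have vv: "(\<lambda>j. ln (grid a T N k / grid a T N j)) = m.v" by (rule ext) (simp add: m.v_def)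
    have cc: "ccoef \<alpha> (grid a T N) i k = cv \<alpha> m.v i k" for i
      using ccoef_cv[of "grid a T N" \<alpha> i k] m.tpos vv by simp
    have epsl: "m.eps < e"
    proof -
      have "m.eps \<le> \<tau> / a" by (rule m.eps_le)
      also have "\<dots> < \<tau>0 / a"
      proof -
        have "\<tau> < \<tau>0" using N(2) unfolding \<tau>_def .
        then show ?thesis by (rule divide_strict_right_mono[OF _ a0])
      qed
      also have "\<dots> \<le> e"
      proof -
        have "\<tau>0 \<le> a * e" unfolding \<tau>0_def by simp
        then have "\<tau>0 / a \<le> (a * e) / a" by (rule divide_right_mono) (use a0 in simp)
        then show ?thesis using a0 by simp
      qed
      finally show ?thesis .
    qed
    have epp: "m.eps > 0" by (rule m.eps_pos)
    have E: "m.eps < e1" "m.eps < e2" "m.eps < e3" "m.eps < e4" "m.eps < e5" using epsl unfolding e_def by auto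
    define S where "S = m.s (k - 1) powr (- \<alpha>)"
    have Sp: "S > 0" unfolding S_def using m.s_pos[of "k - 1"] by simp
    have c1: "ccoef \<alpha> (grid a T N) 1 k > 0"
    proof (cases "k = 2")
      case True
      have "cv \<alpha> m.v (1 + (k - 2)) k = S * cv \<alpha> (W 2 m.eps) 1 2"
        unfolding S_def using k True by (intro m.near_eq) auto
      moreover have "cv \<alpha> (W 2 m.eps) 1 2 > 0" using e1(2)[OF epp E(1)] .
      ultimately show ?thesis unfolding cc using True Sp by simp
    next
      case False
      then show ?thesis unfolding cc using k al by (intro m.c1_mesh) auto
    qed
    have mono: "ccoef \<alpha> (grid a T N) (i - 1) k < ccoef \<alpha> (grid a T N) i k" if i: "2 \<le> i" "i \<le> k" for i
    proof -
      consider "i = k" "k = 2" | "i = k" "k \<ge> 3" | "i + 1 = k" "k = 3" | "i + 1 = k" "k \<ge> 4" | "i + 2 \<le> k"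
        using i by linarith
      then show ?thesis
      proof cases
        case 1
        have "cv \<alpha> m.v (2 + (k - 2)) k = S * cv \<alpha> (W 2 m.eps) 2 2"
          unfolding S_def using k 1 by (intro m.near_eq) auto
        moreover have "cv \<alpha> m.v (1 + (k - 2)) k = S * cv \<alpha> (W 2 m.eps) 1 2"
          unfolding S_def using k 1 by (intro m.near_eq) auto
        moreover have "S * cv \<alpha> (W 2 m.eps) 1 2 < S * cv \<alpha> (W 2 m.eps) 2 2"
          using e2(2)[OF epp E(2)] Sp by simp
        ultimately show ?thesis unfolding cc using 1 by simp
      next
        case 2
        have "cv \<alpha> m.v (3 + (k - 3)) k = S * cv \<alpha> (W 3 m.eps) 3 3"
          unfolding S_def using 2 by (intro m.near_eq) auto
        moreover have "cv \<alpha> m.v (2 + (k - 3)) k = S * cv \<alpha> (W 3 m.eps) 2 3"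
          unfolding S_def using 2 by (intro m.near_eq) auto
        moreover have "S * cv \<alpha> (W 3 m.eps) 2 3 < S * cv \<alpha> (W 3 m.eps) 3 3"
          using e4(2)[OF epp E(4)] Sp by simp
        moreover have "3 + (k - 3) = i" "2 + (k - 3) = i - 1" using 2 by auto
        ultimately show ?thesis unfolding cc by simp
      next
        case 3
        have "cv \<alpha> m.v (2 + (k - 3)) k = S * cv \<alpha> (W 3 m.eps) 2 3"
          unfolding S_def using 3 by (intro m.near_eq) auto
        moreover have "cv \<alpha> m.v (1 + (k - 3)) k = S * cv \<alpha> (W 3 m.eps) 1 3"
          unfolding S_def using 3 by (intro m.near_eq) auto
        moreover have "S * cv \<alpha> (W 3 m.eps) 1 3 < S * cv \<alpha> (W 3 m.eps) 2 3"
          using e3(2)[OF epp E(3)] Sp by simp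
        moreover have "2 + (k - 3) = i" "1 + (k - 3) = i - 1" using 3 by auto
        ultimately show ?thesis unfolding cc by simp
      next
        case 4
        have "cv \<alpha> m.v (3 + (k - 4)) k = S * cv \<alpha> (W 4 m.eps) 3 4"
          unfolding S_def using 4 by (intro m.near_eq) auto
        moreover have "cv \<alpha> m.v (2 + (k - 4)) k = S * cv \<alpha> (W 4 m.eps) 2 4"
          unfolding S_def using 4 by (intro m.near_eq) auto
        moreover have "S * cv \<alpha> (W 4 m.eps) 2 4 < S * cv \<alpha> (W 4 m.eps) 3 4"
          using e5(2)[OF epp E(5)] Sp by simp
        moreover have "3 + (k - 4) = i" "2 + (k - 4) = i - 1" using 4 by auto
        ultimately show ?thesis unfolding cc by simp
      next
        case 5
        then show ?thesis unfolding cc using i al by (intro m.far_mesh) auto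
      qed
    qed
    show "ccoef \<alpha> (grid a T N) 1 k > 0" by (rule c1)
    show "ccoef \<alpha> (grid a T N) i k > ccoef \<alpha> (grid a T N) (i - 1) k" if "2 \<le> i \<and> i \<le> k" for i
      using mono that by blast
  qed
qed

end
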